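(* Suppose $|\psi\rangle = U|\phi\rangle$ for an $n$-qubit stabilizer state $|\phi\rangle$ and an $n$-qubit circuit $U$ with blowup $B$. For each integer $\ell\ge1$, if $B<(d_\ell(\psi)/\ell)^{1/2}$, then $\mathcal{C}_\ell(\psi) = U\,\mathcal{C}^{\mathrm{stab}}_{B\ell}(\phi)$.
   Context: For a circuit $U$ of one- and two-qubit gates, the backwards lightcone $\overleftarrow{L}(S)$ of a set $S$ of output qubits is the set of input qubits connected to some qubit of $S$ by a directed path through the gates, and the forward lightcone $\overrightarrow{L}(S)$ is the analogous set for paths in the reverse direction. The blowup of $U$ is the minimum integer $B$ such that $|\overleftarrow{L}(S)|,|\overrightarrow{L}(S)|\le B|S|$ for every $S\subseteq[n]$. For an $n$-qubit pure state $|\psi\rangle$ and integer $\ell$, $\mathcal{C}_\ell(\psi)$ is the span of all pure states $|\phi\rangle$ with $\phi_A=\psi_A$ for every $A\subseteq[n]$ with $|A|\le\ell$ (reduced density matrices). The distance $d(\mathcal{C})$ of a subspace $\mathcal{C}$ is the maximum $d$ such that for every region $A$ with $|A|<d$ there is a CPTP map $\mathrm{Rec}$ with $\mathrm{Rec}(\mathrm{tr}_A\phi)=\phi$ for all $|\phi\rangle\in\mathcal{C}$; $d_\ell(\psi):=d(\mathcal{C}_\ell(\psi))$. For a stabilizer state $|\phi\rangle$ with stabilizer group $\mathcal{S}$, $\mathcal{C}^{\mathrm{stab}}_\ell(\phi)$ is the subspace of states stabilized by all elements of $\mathcal{S}$ acting nontrivially on at most $\ell$ qubits. $U\mathcal{C}=\{U|\varphi\rangle:|\varphi\rangle\in\mathcal{C}\}$.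 *)

theory Defs
  imports Complex_Main "HOL-Library.Extended_Nat"
begin

text \<open>n-qubit Hilbert space: computational basis states are indexed by subsets
  b of {..<n} (the set of qubits in state 1). A vector is a function
  nat set => complex vanishing outside Pow {..<n}.\<close>

type_synonym vec = "nat set \<Rightarrow> complex"
type_synonym op = "nat set \<Rightarrow> nat set \<Rightarrow> complex"

definition is_state :: "nat \<Rightarrow> vec \<Rightarrow> bool" where
  "is_state n v \<longleftrightarrow> (\<forall>b. \<not> b \<subseteq> {..<n} \<longrightarrow> v b = 0)"

definition is_pure_state :: "nat \<Rightarrow> vec \<Rightarrow> bool" where
  "is_pure_state n v \<longleftrightarrow> is_state n v \<and> (\<Sum>b\<in>Pow {..<n}. (cmod (v b))\<^sup>2) = 1"

definition cspan :: "vec set \<Rightarrow> vec set" where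
  "cspan S = {w. \<exists>(k::nat) (c::nat \<Rightarrow> complex) (vs::nat \<Rightarrow> vec).
      (\<forall>i<k. vs i \<in> S) \<and> w = (\<lambda>b. \<Sum>i<k. c i * vs i b)}"

definition rdm :: "nat \<Rightarrow> nat set \<Rightarrow> vec \<Rightarrow> op" where
  "rdm n R v = (\<lambda>u w. if u \<subseteq> R \<and> w \<subseteq> R then
       (\<Sum>z\<in>Pow ({..<n} - R). v (u \<union> z) * cnj (v (w \<union> z))) else 0)"

definition ptrace :: "nat \<Rightarrow> nat set \<Rightarrow> vec \<Rightarrow> op" where
  "ptrace n A v = rdm n ({..<n} - A) v"

definition proj :: "nat \<Rightarrow> vec \<Rightarrow> op" where
  "proj n v = (\<lambda>x y. if x \<subseteq> {..<n} \<and> y \<subseteq> {..<n} then v x * cnj (v y) else 0)"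

text \<open>CPTP maps from operators on the qubits {..<n} - A to operators on {..<n},
  given in Kraus form: a finite family of operators K with sum K^dagger K = I.\<close>
definition is_kraus :: "nat \<Rightarrow> nat set \<Rightarrow> op list \<Rightarrow> bool" where
  "is_kraus n A Ks \<longleftrightarrow> (\<forall>u v. u \<subseteq> {..<n} - A \<and> v \<subseteq> {..<n} - A \<longrightarrow>
      sum_list (map (\<lambda>K. \<Sum>x\<in>Pow {..<n}. cnj (K x u) * K x v) Ks) = (if u = v then 1 else 0))"

definition kraus_apply :: "nat \<Rightarrow> nat set \<Rightarrow> op list \<Rightarrow> op \<Rightarrow> op" where
  "kraus_apply n A Ks \<rho> = (\<lambda>x y. if x \<subseteq> {..<n} \<and> y \<subseteq> {..<n} then
      sum_list (map (\<lambda>K. \<Sum>u\<in>Pow ({..<n} - A). \<Sum>w\<in>Pow ({..<n} - A).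
          K x u * \<rho> u w * cnj (K y w)) Ks) else 0)"

definition correctable :: "nat \<Rightarrow> vec set \<Rightarrow> nat \<Rightarrow> bool" where
  "correctable n C d \<longleftrightarrow> (\<forall>A. A \<subseteq> {..<n} \<and> card A < d \<longrightarrow>
      (\<exists>Ks. is_kraus n A Ks \<and> (\<forall>v\<in>C. kraus_apply n A Ks (ptrace n A v) = proj n v)))"

definition code_distance :: "nat \<Rightarrow> vec set \<Rightarrow> enat" where
  "code_distance n C = Sup {enat d | d. correctable n C d}"

definition local_code :: "nat \<Rightarrow> nat \<Rightarrow> vec \<Rightarrow> vec set" where
  "local_code n l \<psi> = cspan {\<phi>. is_pure_state n \<phi> \<and>
      (\<forall>A. A \<subseteq> {..<n} \<and> card A \<le> l \<longrightarrow> rdm n A \<phi> = rdm n A \<psi>)}"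

definition d_loc :: "nat \<Rightarrow> nat \<Rightarrow> vec \<Rightarrow> enat" where
  "d_loc n l \<psi> = code_distance n (local_code n l \<psi>)"

text \<open>Pauli operators i^k X^x Z^z, represented by (k, x, z) with k < 4, x, z subsets of {..<n}.\<close>
type_synonym pauli = "nat \<times> nat set \<times> nat set"

definition is_pauli :: "nat \<Rightarrow> pauli \<Rightarrow> bool" where
  "is_pauli n P \<longleftrightarrow> (case P of (k, x, z) \<Rightarrow> k < 4 \<and> x \<subseteq> {..<n} \<and> z \<subseteq> {..<n})"

definition pauli_apply :: "pauli \<Rightarrow> vec \<Rightarrow> vec" where
  "pauli_apply P v = (case P of (k, x, z) \<Rightarrow>
     (\<lambda>b. \<i> ^ k * (-1) ^ card (z \<inter> ((b - x) \<union> (x - b))) * v ((b - x) \<union> (x - b))))"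

definition pauli_weight :: "pauli \<Rightarrow> nat" where
  "pauli_weight P = (case P of (k, x, z) \<Rightarrow> card (x \<union> z))"

definition stab_group :: "nat \<Rightarrow> vec \<Rightarrow> pauli set" where
  "stab_group n v = {P. is_pauli n P \<and> pauli_apply P v = v}"

definition is_stabilizer_state :: "nat \<Rightarrow> vec \<Rightarrow> bool" where
  "is_stabilizer_state n v \<longleftrightarrow> is_pure_state n v \<and> card (stab_group n v) = 2 ^ n"

definition stab_code :: "nat \<Rightarrow> nat \<Rightarrow> vec \<Rightarrow> vec set" where
  "stab_code n l \<phi> = {v. is_state n v \<and>
      (\<forall>P\<in>stab_group n \<phi>. pauli_weight P \<le> l \<longrightarrow> pauli_apply P v = v)}"

text \<open>Circuits: lists of gates (Q, G), Q the set of 1 or 2 qubits acted on, G a unitary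
  matrix indexed by subsets of Q. The first gate of the list is applied first.\<close>
type_synonym gate = "nat set \<times> op"

definition is_gate :: "nat \<Rightarrow> gate \<Rightarrow> bool" where
  "is_gate n g \<longleftrightarrow> (case g of (Q, G) \<Rightarrow> Q \<subseteq> {..<n} \<and> (card Q = 1 \<or> card Q = 2) \<and>
     (\<forall>x y. x \<subseteq> Q \<and> y \<subseteq> Q \<longrightarrow>
        (\<Sum>w\<in>Pow Q. cnj (G w x) * G w y) = (if x = y then 1 else 0)))"

definition gate_apply :: "gate \<Rightarrow> vec \<Rightarrow> vec" where
  "gate_apply g v = (case g of (Q, G) \<Rightarrow>
     (\<lambda>b. \<Sum>y\<in>Pow Q. G (b \<inter> Q) y * v ((b - Q) \<union> y)))"

definition circuit_apply :: "gate list \<Rightarrow> vec \<Rightarrow> vec" where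
  "circuit_apply U v = fold gate_apply U v"

definition lc_step :: "gate \<Rightarrow> nat set \<Rightarrow> nat set" where
  "lc_step g S = (if fst g \<inter> S \<noteq> {} then S \<union> fst g else S)"

fun back_lc :: "gate list \<Rightarrow> nat set \<Rightarrow> nat set" where
  "back_lc [] S = S"
| "back_lc (g # gs) S = lc_step g (back_lc gs S)"

fun fwd_lc :: "gate list \<Rightarrow> nat set \<Rightarrow> nat set" where
  "fwd_lc [] S = S"
| "fwd_lc (g # gs) S = fwd_lc gs (lc_step g S)"

definition blowup :: "nat \<Rightarrow> gate list \<Rightarrow> nat" where
  "blowup n U = (LEAST B. \<forall>S. S \<subseteq> {..<n} \<longrightarrow>
      card (back_lc U S) \<le> B * card S \<and> card (fwd_lc U S) \<le> B * card S)"

end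

theory Submission
  imports Defs
begin

lemma sum_Pow_Un:
  assumes "finite A" "finite B" "A \<inter> B = {}"
  shows "(\<Sum>b\<in>Pow (A \<union> B). f b) = (\<Sum>a\<in>Pow A. \<Sum>c\<in>Pow B. f (a \<union> c))"
proof -
  have img: "Pow (A \<union> B) = (\<lambda>(a,c). a \<union> c) ` (Pow A \<times> Pow B)"
  proof
    show "Pow (A \<union> B) \<subseteq> (\<lambda>(a,c). a \<union> c) ` (Pow A \<times> Pow B)"
    proof
      fix b assume "b \<in> Pow (A \<union> B)"
      then have "b = (\<lambda>(a,c). a \<union> c) (b \<inter> A, b \<inter> B)" by auto
      moreover have "(b \<inter> A, b \<inter> B) \<in> Pow A \<times> Pow B" by auto
      ultimately show "b \<in> (\<lambda>(a,c). a \<union> c) ` (Pow A \<times> Pow B)" by blast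
    qed
  qed auto
  have inj: "inj_on (\<lambda>(a,c). a \<union> c) (Pow A \<times> Pow B)"
  proof (rule inj_onI, clarify)
    fix a c a' c' assume "a \<subseteq> A" "c \<subseteq> B" "a' \<subseteq> A" "c' \<subseteq> B" "a \<union> c = a' \<union> c'"
    with assms(3) show "a = a' \<and> c = c'" by blast
  qed
  have "(\<Sum>b\<in>Pow (A \<union> B). f b) = (\<Sum>p\<in>Pow A \<times> Pow B. f ((\<lambda>(a,c). a \<union> c) p))"
    unfolding img by (rule sum.reindex[OF inj, unfolded comp_def])
  also have "\<dots> = (\<Sum>a\<in>Pow A. \<Sum>c\<in>Pow B. f (a \<union> c))"
    by (simp add: sum.cartesian_product split_beta)
  finally show ?thesis .
qed

lemma sum_Pow_split:
  assumes "finite N" "R \<subseteq> N"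
  shows "(\<Sum>b\<in>Pow N. f b) = (\<Sum>a\<in>Pow R. \<Sum>c\<in>Pow (N - R). f (a \<union> c))"
proof -
  have "N = R \<union> (N - R)" using assms by auto
  then have "(\<Sum>b\<in>Pow N. f b) = (\<Sum>b\<in>Pow (R \<union> (N - R)). f b)" by simp
  also have "\<dots> = (\<Sum>a\<in>Pow R. \<Sum>c\<in>Pow (N - R). f (a \<union> c))"
    by (rule sum_Pow_Un) (use assms in \<open>auto intro: finite_subset\<close>)
  finally show ?thesis .
qed

lemma card_symd_parity:
  assumes "finite z"
  shows "card (z \<inter> A) + card (z \<inter> B) = card (z \<inter> ((A - B) \<union> (B - A))) + 2 * card (z \<inter> A \<inter> B)"
proof -
  have f: "finite (z \<inter> X)" for X using assms by auto
  have a: "card (z \<inter> A) = card (z \<inter> A - B) + card (z \<inter> A \<inter> B)"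
  proof -
    have "card (z \<inter> A) = card ((z \<inter> A - B) \<union> (z \<inter> A \<inter> B))" by (rule arg_cong[where f=card]) blast
    also have "\<dots> = card (z \<inter> A - B) + card (z \<inter> A \<inter> B)" by (rule card_Un_disjoint) (auto simp: f)
    finally show ?thesis .
  qed
  have b: "card (z \<inter> B) = card (z \<inter> B - A) + card (z \<inter> A \<inter> B)"
  proof -
    have "card (z \<inter> B) = card ((z \<inter> B - A) \<union> (z \<inter> A \<inter> B))" by (rule arg_cong[where f=card]) blast
    also have "\<dots> = card (z \<inter> B - A) + card (z \<inter> A \<inter> B)" by (rule card_Un_disjoint) (auto simp: f)
    finally show ?thesis .
  qed
  have c: "card (z \<inter> ((A - B) \<union> (B - A))) = card (z \<inter> A - B) + card (z \<inter> B - A)"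
  proof -
    have "z \<inter> ((A - B) \<union> (B - A)) = (z \<inter> A - B) \<union> (z \<inter> B - A)" by blast
    moreover have "(z \<inter> A - B) \<inter> (z \<inter> B - A) = {}" by blast
    ultimately show ?thesis using f by (simp add: card_Un_disjoint)
  qed
  show ?thesis using a b c by simp
qed

lemma sign_symd:
  assumes "finite z"
  shows "(-1::'a::comm_ring_1) ^ card (z \<inter> ((A - B) \<union> (B - A))) = (-1) ^ card (z \<inter> A) * (-1) ^ card (z \<inter> B)"
proof -
  have "(-1::'a) ^ card (z \<inter> A) * (-1) ^ card (z \<inter> B) = (-1) ^ (card (z \<inter> A) + card (z \<inter> B))"
    by (simp add: power_add)
  also have "\<dots> = (-1) ^ card (z \<inter> ((A - B) \<union> (B - A))) * ((-1) ^ 2) ^ card (z \<inter> A \<inter> B)"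
    unfolding card_symd_parity[OF assms] by (simp add: power_add power_mult)
  finally show ?thesis by simp
qed

lemma char_sum_zero:
  assumes "finite M" "c \<subseteq> M" "c \<noteq> {}"
  shows "(\<Sum>z\<in>Pow M. (-1::complex) ^ card (z \<inter> c)) = 0"
proof -
  obtain j where j: "j \<in> c" using assms by auto
  have jM: "{j} \<subseteq> M" using j assms by auto
  have "(\<Sum>z\<in>Pow M. (-1::complex) ^ card (z \<inter> c))
      = (\<Sum>a\<in>Pow {j}. \<Sum>c'\<in>Pow (M - {j}). (-1) ^ card ((a \<union> c') \<inter> c))"
    by (rule sum_Pow_split[OF assms(1) jM])
  also have "\<dots> = (\<Sum>c'\<in>Pow (M - {j}). \<Sum>a\<in>Pow {j}. (-1) ^ card ((a \<union> c') \<inter> c))"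
    by (rule sum.swap)
  also have "\<dots> = 0"
  proof (rule sum.neutral, rule ballI)
    fix c' assume c': "c' \<in> Pow (M - {j})"
    have "finite c'" using c' assms(1) by (meson PowD Diff_subset finite_subset subset_trans)
    then have fin: "finite (c' \<inter> c)" by simp
    have jn: "j \<notin> c' \<inter> c" using c' by auto
    have "Pow {j} = {{}, {j}}" by (auto simp: subset_singleton_iff)
    then have "(\<Sum>a\<in>Pow {j}. (-1::complex) ^ card ((a \<union> c') \<inter> c))
        = (-1) ^ card (c' \<inter> c) + (-1) ^ card (({j} \<union> c') \<inter> c)" by simp
    also have "({j} \<union> c') \<inter> c = insert j (c' \<inter> c)" using j by auto
    also have "(-1::complex) ^ card (insert j (c' \<inter> c)) = - ((-1) ^ card (c' \<inter> c))"
      using fin jn by simp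
    finally show "(\<Sum>a\<in>Pow {j}. (-1::complex) ^ card ((a \<union> c') \<inter> c)) = 0" by simp
  qed
  finally show ?thesis .
qed

lemma char_sum_empty:
  assumes "finite M"
  shows "(\<Sum>z\<in>Pow M. (-1::complex) ^ card (z \<inter> {})) = 2 ^ card M"
  using assms by (simp add: card_Pow)

lemma sum_symd_reindex:
  assumes "x \<subseteq> N"
  shows "(\<Sum>b\<in>Pow N. f ((b - x) \<union> (x - b))) = (\<Sum>b\<in>Pow N. f b)"
  by (rule sum.reindex_bij_witness[where i="\<lambda>b. (b - x) \<union> (x - b)" and j="\<lambda>b. (b - x) \<union> (x - b)"])
     (use assms in blast)+


lemma sign_symd2:
  assumes "finite X" "finite Y"
  shows "(-1::'a::comm_ring_1) ^ card ((X - Y) \<union> (Y - X)) = (-1) ^ card X * (-1) ^ card Y"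
proof -
  have f: "finite (X \<union> Y)" using assms by simp
  have "(-1::'a) ^ card ((X \<union> Y) \<inter> ((X - Y) \<union> (Y - X))) = (-1) ^ card ((X \<union> Y) \<inter> X) * (-1) ^ card ((X \<union> Y) \<inter> Y)"
    by (rule sign_symd[OF f])
  moreover have "(X \<union> Y) \<inter> ((X - Y) \<union> (Y - X)) = (X - Y) \<union> (Y - X)" by blast
  moreover have "(X \<union> Y) \<inter> X = X" by blast
  moreover have "(X \<union> Y) \<inter> Y = Y" by blast
  ultimately show ?thesis by simp
qed

lemma sign_sq: "((-1::'a::comm_ring_1) ^ m) * ((-1) ^ m) = 1"
  by (simp add: power_mult_distrib[symmetric])

definition ip :: "nat \<Rightarrow> vec \<Rightarrow> vec \<Rightarrow> complex" where
  "ip n v w = (\<Sum>b\<in>Pow {..<n}. cnj (v b) * w b)"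

lemma pauli_apply_simp:
  "pauli_apply (k, x, z) v b = \<i> ^ k * (-1) ^ card (z \<inter> ((b - x) \<union> (x - b))) * v ((b - x) \<union> (x - b))"
  by (simp add: pauli_apply_def)

lemma pauli_state:
  assumes "is_pauli n P" "is_state n v"
  shows "is_state n (pauli_apply P v)"
proof -
  obtain k x z where P: "P = (k, x, z)" by (cases P) auto
  have x: "x \<subseteq> {..<n}" using assms(1) P by (simp add: is_pauli_def)
  show ?thesis unfolding is_state_def
  proof (intro allI impI)
    fix b assume "\<not> b \<subseteq> {..<n}"
    then have "\<not> (b - x) \<union> (x - b) \<subseteq> {..<n}" using x by blast
    then have "v ((b - x) \<union> (x - b)) = 0" using assms(2) by (simp add: is_state_def)
    then show "pauli_apply P v b = 0" by (simp add: P pauli_apply_simp)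
  qed
qed

lemma pauli_phase: "pauli_apply (k, x, z) v = (\<lambda>b. \<i> ^ k * pauli_apply (0, x, z) v b)"
  by (simp add: pauli_apply_simp fun_eq_iff)

lemma pauli_lin2:
  "pauli_apply P (\<lambda>b. a * v b + c * w b) = (\<lambda>b. a * pauli_apply P v b + c * pauli_apply P w b)"
  by (cases P) (simp add: pauli_apply_simp fun_eq_iff algebra_simps)

lemma pauli_linsum:
  "pauli_apply P (\<lambda>b. \<Sum>i<k. c i * vs i b) = (\<lambda>b. \<Sum>i<k. c i * pauli_apply P (vs i) b)"
  by (cases P) (simp add: pauli_apply_simp fun_eq_iff sum_distrib_left algebra_simps)

lemma pauli_id: "pauli_apply (0, {}, {}) v = v"
  by (simp add: pauli_apply_simp fun_eq_iff)

lemma cnj_sign: "cnj ((-1::complex) ^ m) = (-1) ^ m"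
  by simp

lemma pauli_unitary:
  assumes "is_pauli n P"
  shows "ip n (pauli_apply P v) (pauli_apply P w) = ip n v w"
proof -
  obtain k x z where P: "P = (k, x, z)" by (cases P) auto
  have x: "x \<subseteq> {..<n}" using assms(1) P by (simp add: is_pauli_def)
  have ik: "cnj (\<i> ^ k) * \<i> ^ k = 1"
  proof -
    have "cnj (\<i> ^ k) * \<i> ^ k = \<i> ^ k * cnj (\<i> ^ k)" by (rule mult.commute)
    also have "\<dots> = of_real ((cmod (\<i> ^ k))\<^sup>2)" by (rule complex_norm_square[symmetric])
    also have "\<dots> = 1" by (simp add: norm_power)
    finally show ?thesis .
  qed
  have "ip n (pauli_apply P v) (pauli_apply P w)
      = (\<Sum>b\<in>Pow {..<n}. (cnj (\<i> ^ k) * \<i> ^ k) * ((-1) ^ card (z \<inter> ((b - x) \<union> (x - b))) * (-1) ^ card (z \<inter> ((b - x) \<union> (x - b))))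
           * (cnj (v ((b - x) \<union> (x - b))) * w ((b - x) \<union> (x - b))))"
    unfolding ip_def P pauli_apply_simp by (intro sum.cong) (simp_all add: algebra_simps)
  also have "\<dots> = (\<Sum>b\<in>Pow {..<n}. cnj (v ((b - x) \<union> (x - b))) * w ((b - x) \<union> (x - b)))"
    by (simp only: ik sign_sq mult_1_left)
  also have "\<dots> = ip n v w" unfolding ip_def by (rule sum_symd_reindex[OF x])
  finally show ?thesis .
qed


lemma pauli_comp:
  assumes "finite z1" "finite z2"
  shows "pauli_apply (k1, x1, z1) (pauli_apply (k2, x2, z2) v)
       = (\<lambda>b. \<i> ^ (k1 + k2) * (-1) ^ card (z1 \<inter> x2) * pauli_apply (0, sym_diff x1 x2, sym_diff z1 z2) v b)"
proof
  fix b
  define c where "c = sym_diff b (sym_diff x1 x2)"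
  have c2: "sym_diff (sym_diff b x1) x2 = c" unfolding c_def by blast
  have fz: "finite (z1 \<inter> X)" "finite (z2 \<inter> X)" for X using assms by auto
  have e1: "(-1::complex) ^ card (z1 \<inter> c) = (-1) ^ card (z1 \<inter> sym_diff b x1) * (-1) ^ card (z1 \<inter> x2)"
  proof -
    have "z1 \<inter> c = sym_diff (z1 \<inter> sym_diff b x1) (z1 \<inter> x2)" unfolding c_def by blast
    then show ?thesis using sign_symd2[OF fz(1) fz(1), of "sym_diff b x1" x2] by simp
  qed
  have e1': "(-1::complex) ^ card (z1 \<inter> sym_diff b x1) = (-1) ^ card (z1 \<inter> c) * (-1) ^ card (z1 \<inter> x2)"
    using e1 sign_sq[of "card (z1 \<inter> x2)"] by (simp add: mult.assoc)
  have e2: "(-1::complex) ^ card (sym_diff z1 z2 \<inter> c) = (-1) ^ card (z1 \<inter> c) * (-1) ^ card (z2 \<inter> c)"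
  proof -
    have "sym_diff z1 z2 \<inter> c = sym_diff (z1 \<inter> c) (z2 \<inter> c)" by blast
    then show ?thesis using sign_symd2[OF fz(1) fz(2), of c c] by simp
  qed
  show "pauli_apply (k1, x1, z1) (pauli_apply (k2, x2, z2) v) b
       = \<i> ^ (k1 + k2) * (-1) ^ card (z1 \<inter> x2) * pauli_apply (0, sym_diff x1 x2, sym_diff z1 z2) v b"
    unfolding pauli_apply_simp c2 c_def[symmetric] e1' e2 by (simp add: power_add algebra_simps)
qed

lemma pauli_commute:
  assumes "is_pauli n (k1, x1, z1)" "is_pauli n (k2, x2, z2)"
  shows "pauli_apply (k1, x1, z1) (pauli_apply (k2, x2, z2) v)
       = (\<lambda>b. (-1) ^ (card (z1 \<inter> x2) + card (z2 \<inter> x1)) * pauli_apply (k2, x2, z2) (pauli_apply (k1, x1, z1) v) b)"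
proof -
  have f: "finite z1" "finite z2" using assms by (auto simp: is_pauli_def intro: finite_subset)
  have s: "sym_diff x2 x1 = sym_diff x1 x2" "sym_diff z2 z1 = sym_diff z1 z2" by blast+
  show ?thesis
    unfolding pauli_comp[OF f] pauli_comp[OF f(2) f(1)] s
  proof
    fix b
    have "(-1::complex) ^ (card (z1 \<inter> x2) + card (z2 \<inter> x1)) * (-1) ^ card (z2 \<inter> x1)
        = (-1) ^ card (z1 \<inter> x2)" by (simp add: power_add mult.assoc sign_sq)
    then show "\<i> ^ (k1 + k2) * (- 1) ^ card (z1 \<inter> x2) * pauli_apply (0, sym_diff x1 x2, sym_diff z1 z2) v b =
         (- 1) ^ (card (z1 \<inter> x2) + card (z2 \<inter> x1)) *
         (\<i> ^ (k2 + k1) * (- 1) ^ card (z2 \<inter> x1) * pauli_apply (0, sym_diff x1 x2, sym_diff z1 z2) v b)"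
      by (simp add: algebra_simps)
  qed
qed

lemma pauli_square:
  assumes "finite z"
  shows "pauli_apply (k, x, z) (pauli_apply (k, x, z) v) = (\<lambda>b. \<i> ^ (k + k) * (-1) ^ card (z \<inter> x) * v b)"
  unfolding pauli_comp[OF assms assms] by (simp add: pauli_id)


definition rdm2 :: "nat \<Rightarrow> nat set \<Rightarrow> vec \<Rightarrow> vec \<Rightarrow> nat set \<Rightarrow> nat set \<Rightarrow> complex" where
  "rdm2 n R v w u u' = (\<Sum>z\<in>Pow ({..<n} - R). v (u \<union> z) * cnj (w (u' \<union> z)))"

lemma rdm_rdm2: "rdm n R v u u' = (if u \<subseteq> R \<and> u' \<subseteq> R then rdm2 n R v v u u' else 0)"
  by (simp add: rdm_def rdm2_def)

lemma rdm_eqI: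
  assumes "\<And>u u'. u \<subseteq> R \<Longrightarrow> u' \<subseteq> R \<Longrightarrow> rdm2 n R v v u u' = rdm2 n R w w u u'"
  shows "rdm n R v = rdm n R w"
  using assms by (simp add: rdm_rdm2 fun_eq_iff)

lemma rdm_eqD:
  assumes "rdm n R v = rdm n R w" "u \<subseteq> R" "u' \<subseteq> R"
  shows "rdm2 n R v v u u' = rdm2 n R w w u u'"
  using assms by (metis rdm_rdm2)

lemma rdm2_restrict:
  assumes "A \<subseteq> R" "R \<subseteq> {..<n}"
  shows "rdm2 n A v w u u' = (\<Sum>c\<in>Pow (R - A). rdm2 n R v w (u \<union> c) (u' \<union> c))"
proof -
  have sub: "R - A \<subseteq> {..<n} - A" using assms by blast
  have eq: "({..<n} - A) - (R - A) = {..<n} - R" using assms by blast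
  have "rdm2 n A v w u u' = (\<Sum>c\<in>Pow (R - A). \<Sum>d\<in>Pow (({..<n} - A) - (R - A)). v (u \<union> (c \<union> d)) * cnj (w (u' \<union> (c \<union> d))))"
    unfolding rdm2_def by (rule sum_Pow_split[OF _ sub]) simp
  also have "\<dots> = (\<Sum>c\<in>Pow (R - A). rdm2 n R v w (u \<union> c) (u' \<union> c))"
    unfolding eq rdm2_def by (simp add: Un_assoc)
  finally show ?thesis .
qed

lemma rdm_restrict_eq:
  assumes "A \<subseteq> R" "R \<subseteq> {..<n}" "rdm n R v = rdm n R w"
  shows "rdm n A v = rdm n A w"
proof (rule rdm_eqI)
  fix u u' assume u: "u \<subseteq> A" "u' \<subseteq> A"
  show "rdm2 n A v v u u' = rdm2 n A w w u u'"
    unfolding rdm2_restrict[OF assms(1,2)]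
  proof (rule sum.cong[OF refl])
    fix c assume "c \<in> Pow (R - A)"
    then have "u \<union> c \<subseteq> R" "u' \<union> c \<subseteq> R" using u assms(1) by auto
    then show "rdm2 n R v v (u \<union> c) (u' \<union> c) = rdm2 n R w w (u \<union> c) (u' \<union> c)"
      using rdm_eqD[OF assms(3)] by blast
  qed
qed

lemma pauli_exp_rdm2:
  assumes "x \<subseteq> R" "z \<subseteq> R" "R \<subseteq> {..<n}"
  shows "ip n v (pauli_apply (k, x, z) w)
       = (\<Sum>a\<in>Pow R. \<i> ^ k * (-1) ^ card (z \<inter> sym_diff a x) * rdm2 n R w v (sym_diff a x) a)"
proof -
  have "ip n v (pauli_apply (k, x, z) w)
      = (\<Sum>a\<in>Pow R. \<Sum>c\<in>Pow ({..<n} - R). cnj (v (a \<union> c)) * (\<i> ^ k * (-1) ^ card (z \<inter> sym_diff (a \<union> c) x) * w (sym_diff (a \<union> c) x)))"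
    unfolding ip_def pauli_apply_simp by (rule sum_Pow_split[OF _ assms(3)]) simp
  also have "\<dots> = (\<Sum>a\<in>Pow R. \<Sum>c\<in>Pow ({..<n} - R). \<i> ^ k * (-1) ^ card (z \<inter> sym_diff a x) * (w (sym_diff a x \<union> c) * cnj (v (a \<union> c))))"
  proof (intro sum.cong refl)
    fix a c assume a: "a \<in> Pow R" and c: "c \<in> Pow ({..<n} - R)"
    have s1: "sym_diff (a \<union> c) x = sym_diff a x \<union> c" using a c assms by blast
    have s2: "z \<inter> (sym_diff a x \<union> c) = z \<inter> sym_diff a x" using a c assms by blast
    show "cnj (v (a \<union> c)) * (\<i> ^ k * (-1) ^ card (z \<inter> sym_diff (a \<union> c) x) * w (sym_diff (a \<union> c) x))
        = \<i> ^ k * (-1) ^ card (z \<inter> sym_diff a x) * (w (sym_diff a x \<union> c) * cnj (v (a \<union> c)))"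
      unfolding s1 s2 by (simp add: algebra_simps)
  qed
  also have "\<dots> = (\<Sum>a\<in>Pow R. \<i> ^ k * (-1) ^ card (z \<inter> sym_diff a x) * rdm2 n R w v (sym_diff a x) a)"
    unfolding rdm2_def by (simp add: sum_distrib_left)
  finally show ?thesis .
qed

lemma pauli_exp_eq:
  assumes "x \<subseteq> R" "z \<subseteq> R" "R \<subseteq> {..<n}" "rdm n R v = rdm n R v'"
  shows "ip n v (pauli_apply (k, x, z) v) = ip n v' (pauli_apply (k, x, z) v')"
  unfolding pauli_exp_rdm2[OF assms(1-3)]
proof (rule sum.cong[OF refl])
  fix a assume a: "a \<in> Pow R"
  then have "sym_diff a x \<subseteq> R" using assms by blast
  then have "rdm2 n R v v (sym_diff a x) a = rdm2 n R v' v' (sym_diff a x) a"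
    using rdm_eqD[OF assms(4)] a by blast
  then show "\<i> ^ k * (-1) ^ card (z \<inter> sym_diff a x) * rdm2 n R v v (sym_diff a x) a =
         \<i> ^ k * (-1) ^ card (z \<inter> sym_diff a x) * rdm2 n R v' v' (sym_diff a x) a" by simp
qed

lemma fourier_rdm:
  assumes "L \<subseteq> {..<n}" "u \<subseteq> L" "u' \<subseteq> L"
  shows "(\<Sum>z\<in>Pow L. (-1) ^ card (z \<inter> u) * ip n v (pauli_apply (0, sym_diff u u', z) v))
       = 2 ^ card L * rdm2 n L v v u u'"
proof -
  define x where "x = sym_diff u u'"
  have fL: "finite L" using assms(1) finite_subset by blast
  have xL: "x \<subseteq> L" using assms unfolding x_def by blast
  have "(\<Sum>z\<in>Pow L. (-1) ^ card (z \<inter> u) * ip n v (pauli_apply (0, x, z) v))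
      = (\<Sum>z\<in>Pow L. \<Sum>a\<in>Pow L. rdm2 n L v v (sym_diff a x) a * ((-1) ^ card (z \<inter> u) * (-1) ^ card (z \<inter> sym_diff a x)))"
  proof (rule sum.cong[OF refl])
    fix z assume z: "z \<in> Pow L"
    show "(-1) ^ card (z \<inter> u) * ip n v (pauli_apply (0, x, z) v)
        = (\<Sum>a\<in>Pow L. rdm2 n L v v (sym_diff a x) a * ((-1) ^ card (z \<inter> u) * (-1) ^ card (z \<inter> sym_diff a x)))"
    proof -
      have zL: "z \<subseteq> L" using z by simp
      show ?thesis unfolding pauli_exp_rdm2[OF xL zL assms(1)]
        by (simp add: sum_distrib_left algebra_simps)
    qed
  qed
  also have "\<dots> = (\<Sum>a\<in>Pow L. rdm2 n L v v (sym_diff a x) a * (\<Sum>z\<in>Pow L. (-1) ^ card (z \<inter> sym_diff a u')))"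
    apply (subst sum.swap)
  proof (rule sum.cong[OF refl])
    fix a assume a: "a \<in> Pow L"
    have "(\<Sum>z\<in>Pow L. rdm2 n L v v (sym_diff a x) a * ((-1) ^ card (z \<inter> u) * (-1) ^ card (z \<inter> sym_diff a x)))
        = (\<Sum>z\<in>Pow L. rdm2 n L v v (sym_diff a x) a * (-1::complex) ^ card (z \<inter> sym_diff a u'))"
    proof (rule sum.cong[OF refl])
      fix z assume z: "z \<in> Pow L"
      have fz: "finite z" using z fL finite_subset by blast
      have "(-1::complex) ^ card (z \<inter> u) * (-1) ^ card (z \<inter> sym_diff a x) = (-1) ^ card (z \<inter> sym_diff u (sym_diff a x))"
        by (rule sym[OF sign_symd[OF fz]])
      also have "sym_diff u (sym_diff a x) = sym_diff a u'" unfolding x_def by blast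
      finally show "rdm2 n L v v (sym_diff a x) a * ((-1) ^ card (z \<inter> u) * (-1) ^ card (z \<inter> sym_diff a x))
          = rdm2 n L v v (sym_diff a x) a * (-1::complex) ^ card (z \<inter> sym_diff a u')" by simp
    qed
    then show "(\<Sum>z\<in>Pow L. rdm2 n L v v (sym_diff a x) a * ((-1) ^ card (z \<inter> u) * (-1) ^ card (z \<inter> sym_diff a x)))
        = rdm2 n L v v (sym_diff a x) a * (\<Sum>z\<in>Pow L. (-1) ^ card (z \<inter> sym_diff a u'))"
      by (simp add: sum_distrib_left)
  qed
  also have "\<dots> = (\<Sum>a\<in>Pow L. if a = u' then 2 ^ card L * rdm2 n L v v u u' else 0)"
  proof (rule sum.cong[OF refl])
    fix a assume a: "a \<in> Pow L"
    show "rdm2 n L v v (sym_diff a x) a * (\<Sum>z\<in>Pow L. (-1) ^ card (z \<inter> sym_diff a u'))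
        = (if a = u' then 2 ^ card L * rdm2 n L v v u u' else 0)"
    proof (cases "a = u'")
      case True
      have "sym_diff u' x = u" unfolding x_def by blast
      then show ?thesis using True char_sum_empty[OF fL] by simp
    next
      case False
      have "sym_diff a u' \<subseteq> L" "sym_diff a u' \<noteq> {}" using a assms False by blast+
      then show ?thesis using False char_sum_zero[OF fL] by simp
    qed
  qed
  also have "\<dots> = 2 ^ card L * rdm2 n L v v u u'"
    using assms(3) fL by (simp add: sum.delta)
  finally show ?thesis unfolding x_def .
qed

lemma pauli_complete:
  assumes "L \<subseteq> {..<n}"
    and "\<And>x z. x \<subseteq> L \<Longrightarrow> z \<subseteq> L \<Longrightarrow> ip n v (pauli_apply (0, x, z) v) = ip n w (pauli_apply (0, x, z) w)"
  shows "rdm n L v = rdm n L w"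
proof (rule rdm_eqI)
  fix u u' assume u: "u \<subseteq> L" "u' \<subseteq> L"
  have "sym_diff u u' \<subseteq> L" using u by blast
  then have "(\<Sum>z\<in>Pow L. (-1) ^ card (z \<inter> u) * ip n v (pauli_apply (0, sym_diff u u', z) v))
      = (\<Sum>z\<in>Pow L. (-1) ^ card (z \<inter> u) * ip n w (pauli_apply (0, sym_diff u u', z) w))"
    using assms(2) by (intro sum.cong) auto
  then have "(2::complex) ^ card L * rdm2 n L v v u u' = 2 ^ card L * rdm2 n L w w u u'"
    unfolding fourier_rdm[OF assms(1) u] .
  then show "rdm2 n L v v u u' = rdm2 n L w w u u'" by simp
qed


lemma gate_apply_simp: "gate_apply (Q, G) v b = (\<Sum>y\<in>Pow Q. G (b \<inter> Q) y * v ((b - Q) \<union> y))"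
  by (simp add: gate_apply_def)

lemma is_gateD:
  assumes "is_gate n (Q, G)"
  shows "Q \<subseteq> {..<n}" "finite Q"
    "\<And>x y. x \<subseteq> Q \<Longrightarrow> y \<subseteq> Q \<Longrightarrow> (\<Sum>w\<in>Pow Q. cnj (G w x) * G w y) = (if x = y then 1 else 0)"
  using assms by (auto simp: is_gate_def intro: finite_subset)

lemma gate_state:
  assumes "is_gate n g" "is_state n v"
  shows "is_state n (gate_apply g v)"
proof -
  obtain Q G where g: "g = (Q, G)" by (cases g) auto
  have Q: "Q \<subseteq> {..<n}" using is_gateD(1) assms(1) g by blast
  show ?thesis unfolding is_state_def
  proof (intro allI impI)
    fix b assume b: "\<not> b \<subseteq> {..<n}"
    have "\<And>y. y \<in> Pow Q \<Longrightarrow> v ((b - Q) \<union> y) = 0"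
    proof -
      fix y assume "y \<in> Pow Q"
      have "\<not> (b - Q) \<union> y \<subseteq> {..<n}" using b Q by blast
      then show "v ((b - Q) \<union> y) = 0" using assms(2) by (simp add: is_state_def)
    qed
    then show "gate_apply g v b = 0" by (simp add: g gate_apply_simp)
  qed
qed

lemma gate_linsum:
  "gate_apply g (\<lambda>b. \<Sum>i<k. c i * vs i b) = (\<lambda>b. \<Sum>i<k. c i * gate_apply g (vs i) b)"
proof -
  obtain Q G where g: "g = (Q, G)" by (cases g) auto
  show ?thesis unfolding g fun_eq_iff gate_apply_simp
    by (simp add: sum_distrib_left algebra_simps sum.swap[of _ "Pow Q"])
qed

lemma gate_lin2:
  "gate_apply g (\<lambda>b. a * v b + c * w b) = (\<lambda>b. a * gate_apply g v b + c * gate_apply g w b)"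
proof -
  obtain Q G where g: "g = (Q, G)" by (cases g) auto
  show ?thesis unfolding g fun_eq_iff gate_apply_simp
    by (simp add: sum_distrib_left algebra_simps sum.distrib)
qed

lemma prod_sums_cnj:
  "(\<Sum>y\<in>A. f y) * cnj (\<Sum>y\<in>B. g y) = (\<Sum>y\<in>A. \<Sum>y'\<in>B. f y * cnj (g y'))"
  by (simp add: sum_product cnj_sum)

lemma sum_swap3:
  "(\<Sum>q\<in>A. \<Sum>y\<in>B. \<Sum>y'\<in>C. f q y y') = (\<Sum>y\<in>B. \<Sum>y'\<in>C. \<Sum>q\<in>A. f q y y')"
  by (rule trans[OF sum.swap], rule sum.cong[OF refl], rule sum.swap)

lemma gate_disj:
  assumes g: "is_gate n (Q, G)" and R: "R \<subseteq> {..<n}" and QR: "Q \<inter> R = {}"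
    and u: "u \<subseteq> R" "u' \<subseteq> R"
  shows "rdm2 n R (gate_apply (Q, G) v) (gate_apply (Q, G) w) u u' = rdm2 n R v w u u'"
proof -
  note gd = is_gateD[OF g]
  define D where "D = ({..<n} - R) - Q"
  have QN: "Q \<subseteq> {..<n} - R" using gd(1) QR by blast
  have "rdm2 n R (gate_apply (Q, G) v) (gate_apply (Q, G) w) u u'
     = (\<Sum>q\<in>Pow Q. \<Sum>d\<in>Pow D. gate_apply (Q, G) v (u \<union> (q \<union> d)) * cnj (gate_apply (Q, G) w (u' \<union> (q \<union> d))))"
    unfolding rdm2_def D_def by (rule sum_Pow_split[OF _ QN]) simp
  also have "\<dots> = (\<Sum>q\<in>Pow Q. \<Sum>d\<in>Pow D. \<Sum>y\<in>Pow Q. \<Sum>y'\<in>Pow Q. (G q y * cnj (G q y')) * (v ((u \<union> d) \<union> y) * cnj (w ((u' \<union> d) \<union> y'))))"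
  proof (intro sum.cong refl)
    fix q d assume q: "q \<in> Pow Q" and d: "d \<in> Pow D"
    have e1: "(u \<union> (q \<union> d)) \<inter> Q = q" "(u' \<union> (q \<union> d)) \<inter> Q = q" using q d u QR unfolding D_def by blast+
    have e2: "(u \<union> (q \<union> d)) - Q = u \<union> d" "(u' \<union> (q \<union> d)) - Q = u' \<union> d" using q d u QR unfolding D_def by blast+
    show "gate_apply (Q, G) v (u \<union> (q \<union> d)) * cnj (gate_apply (Q, G) w (u' \<union> (q \<union> d)))
        = (\<Sum>y\<in>Pow Q. \<Sum>y'\<in>Pow Q. (G q y * cnj (G q y')) * (v ((u \<union> d) \<union> y) * cnj (w ((u' \<union> d) \<union> y'))))"
      unfolding gate_apply_simp e1 e2 prod_sums_cnj by (simp add: algebra_simps)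
  qed
  also have "\<dots> = (\<Sum>d\<in>Pow D. \<Sum>y\<in>Pow Q. \<Sum>y'\<in>Pow Q. (\<Sum>q\<in>Pow Q. G q y * cnj (G q y')) * (v ((u \<union> d) \<union> y) * cnj (w ((u' \<union> d) \<union> y'))))"
    by (rule trans[OF sum.swap], rule sum.cong[OF refl], subst sum_swap3, simp add: sum_distrib_right)
  also have "\<dots> = (\<Sum>d\<in>Pow D. \<Sum>y\<in>Pow Q. \<Sum>y'\<in>Pow Q. (if y = y' then v ((u \<union> d) \<union> y) * cnj (w ((u' \<union> d) \<union> y')) else 0))"
  proof (intro sum.cong refl)
    fix d y y' assume y: "y \<in> Pow Q" "y' \<in> Pow Q"
    have "(\<Sum>q\<in>Pow Q. G q y * cnj (G q y')) = cnj (\<Sum>q\<in>Pow Q. cnj (G q y) * G q y')"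
      by (simp add: cnj_sum mult.commute)
    also have "\<dots> = (if y = y' then 1 else 0)" using gd(3)[of y y'] y by simp
    finally show "(\<Sum>q\<in>Pow Q. G q y * cnj (G q y')) * (v ((u \<union> d) \<union> y) * cnj (w ((u' \<union> d) \<union> y')))
        = (if y = y' then v ((u \<union> d) \<union> y) * cnj (w ((u' \<union> d) \<union> y')) else 0)" by simp
  qed
  also have "\<dots> = (\<Sum>d\<in>Pow D. \<Sum>y\<in>Pow Q. v ((u \<union> d) \<union> y) * cnj (w ((u' \<union> d) \<union> y)))"
    using gd(2) by (simp add: sum.delta)
  also have "\<dots> = (\<Sum>y\<in>Pow Q. \<Sum>d\<in>Pow D. v (u \<union> (y \<union> d)) * cnj (w (u' \<union> (y \<union> d))))"
    by (subst sum.swap) (simp add: Un_ac)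
  also have "\<dots> = rdm2 n R v w u u'"
    unfolding rdm2_def D_def by (rule sum_Pow_split[symmetric, OF _ QN]) simp
  finally show ?thesis .
qed

lemma gate_cover:
  assumes g: "is_gate n (Q, G)" and R: "R \<subseteq> {..<n}" and QR: "Q \<subseteq> R"
    and u: "u \<subseteq> R" "u' \<subseteq> R"
  shows "rdm2 n R (gate_apply (Q, G) v) (gate_apply (Q, G) w) u u'
       = (\<Sum>y\<in>Pow Q. \<Sum>y'\<in>Pow Q. G (u \<inter> Q) y * cnj (G (u' \<inter> Q) y') * rdm2 n R v w ((u - Q) \<union> y) ((u' - Q) \<union> y'))"
proof -
  have "rdm2 n R (gate_apply (Q, G) v) (gate_apply (Q, G) w) u u'
      = (\<Sum>z\<in>Pow ({..<n} - R). \<Sum>y\<in>Pow Q. \<Sum>y'\<in>Pow Q. G (u \<inter> Q) y * cnj (G (u' \<inter> Q) y') * (v (((u - Q) \<union> y) \<union> z) * cnj (w (((u' - Q) \<union> y') \<union> z))))"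
    unfolding rdm2_def
  proof (intro sum.cong refl)
    fix z assume z: "z \<in> Pow ({..<n} - R)"
    have e1: "(u \<union> z) \<inter> Q = u \<inter> Q" "(u' \<union> z) \<inter> Q = u' \<inter> Q" using z QR by blast+
    have e2: "\<And>y. ((u \<union> z) - Q) \<union> y = ((u - Q) \<union> y) \<union> z" "\<And>y. ((u' \<union> z) - Q) \<union> y = ((u' - Q) \<union> y) \<union> z"
      using z QR by blast+
    show "gate_apply (Q, G) v (u \<union> z) * cnj (gate_apply (Q, G) w (u' \<union> z))
      = (\<Sum>y\<in>Pow Q. \<Sum>y'\<in>Pow Q. G (u \<inter> Q) y * cnj (G (u' \<inter> Q) y') * (v (((u - Q) \<union> y) \<union> z) * cnj (w (((u' - Q) \<union> y') \<union> z))))"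
      unfolding gate_apply_simp e1 e2 prod_sums_cnj by (simp add: algebra_simps)
  qed
  also have "\<dots> = (\<Sum>y\<in>Pow Q. \<Sum>y'\<in>Pow Q. G (u \<inter> Q) y * cnj (G (u' \<inter> Q) y') * rdm2 n R v w ((u - Q) \<union> y) ((u' - Q) \<union> y'))"
    unfolding rdm2_def
    by (subst sum_swap3, simp add: sum_distrib_left)
  finally show ?thesis .
qed

lemma gate_loc:
  assumes g: "is_gate n g" and R: "R \<subseteq> {..<n}"
    and eq: "rdm n (lc_step g R) v = rdm n (lc_step g R) v'"
  shows "rdm n R (gate_apply g v) = rdm n R (gate_apply g v')"
proof -
  obtain Q G where gg: "g = (Q, G)" by (cases g) auto
  note gd = is_gateD[OF g[unfolded gg]]
  show ?thesis
  proof (cases "Q \<inter> R = {}")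
    case True
    then have "lc_step g R = R" by (simp add: lc_step_def gg)
    then have eq': "rdm n R v = rdm n R v'" using eq by simp
    show ?thesis
    proof (rule rdm_eqI)
      fix u u' assume u: "u \<subseteq> R" "u' \<subseteq> R"
      show "rdm2 n R (gate_apply g v) (gate_apply g v) u u' = rdm2 n R (gate_apply g v') (gate_apply g v') u u'"
        unfolding gg gate_disj[OF g[unfolded gg] R True u] using rdm_eqD[OF eq' u] .
    qed
  next
    case False
    define R2 where "R2 = R \<union> Q"
    have l: "lc_step g R = R2" using False by (simp add: lc_step_def gg R2_def Int_commute)
    have R2: "R2 \<subseteq> {..<n}" using R gd(1) by (simp add: R2_def)
    have eq2: "rdm n R2 (gate_apply g v) = rdm n R2 (gate_apply g v')"
    proof (rule rdm_eqI)
      fix u u' assume u: "u \<subseteq> R2" "u' \<subseteq> R2"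
      have "\<And>y y'. y \<in> Pow Q \<Longrightarrow> y' \<in> Pow Q \<Longrightarrow> rdm2 n R2 v v ((u - Q) \<union> y) ((u' - Q) \<union> y') = rdm2 n R2 v' v' ((u - Q) \<union> y) ((u' - Q) \<union> y')"
      proof -
        fix y y' assume "y \<in> Pow Q" "y' \<in> Pow Q"
        then have "(u - Q) \<union> y \<subseteq> R2" "(u' - Q) \<union> y' \<subseteq> R2" using u by (auto simp: R2_def)
        then show "rdm2 n R2 v v ((u - Q) \<union> y) ((u' - Q) \<union> y') = rdm2 n R2 v' v' ((u - Q) \<union> y) ((u' - Q) \<union> y')"
          using rdm_eqD[OF eq[unfolded l]] by blast
      qed
      note h = this
      have QR2: "Q \<subseteq> R2" by (simp add: R2_def)
      show "rdm2 n R2 (gate_apply g v) (gate_apply g v) u u' = rdm2 n R2 (gate_apply g v') (gate_apply g v') u u'"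
        unfolding gg gate_cover[OF g[unfolded gg] R2 QR2 u]
        by (intro sum.cong refl) (simp add: h)
    qed
    show ?thesis by (rule rdm_restrict_eq[OF _ R2 eq2]) (simp add: R2_def)
  qed
qed

lemma circuit_Cons: "circuit_apply (g # gs) v = circuit_apply gs (gate_apply g v)"
  by (simp add: circuit_apply_def)

lemma circuit_Nil: "circuit_apply [] v = v"
  by (simp add: circuit_apply_def)

lemma circuit_append: "circuit_apply (xs @ ys) v = circuit_apply ys (circuit_apply xs v)"
  by (simp add: circuit_apply_def)

lemma lc_step_sub:
  assumes "is_gate n g" "S \<subseteq> {..<n}"
  shows "lc_step g S \<subseteq> {..<n}" "S \<subseteq> lc_step g S"
proof -
  obtain Q G where gg: "g = (Q, G)" by (cases g) auto
  show "lc_step g S \<subseteq> {..<n}" "S \<subseteq> lc_step g S"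
    using is_gateD(1)[OF assms(1)[unfolded gg]] assms(2) by (auto simp: lc_step_def gg)
qed

lemma back_lc_sub:
  assumes "\<forall>g\<in>set U. is_gate n g" "S \<subseteq> {..<n}"
  shows "back_lc U S \<subseteq> {..<n}" "S \<subseteq> back_lc U S"
  using assms
proof (induction U arbitrary: S)
  case Nil
  { case 1 then show ?case by simp next case 2 then show ?case by simp }
next
  case (Cons g gs)
  { case 1 then show ?case using Cons.IH(1)[of S] lc_step_sub(1)[of n g "back_lc gs S"] by simp
  next
    case 2 then show ?case using Cons.IH(1,2)[of S] lc_step_sub(2)[of n g "back_lc gs S"] by auto }
qed

lemma fwd_lc_sub:
  assumes "\<forall>g\<in>set U. is_gate n g" "S \<subseteq> {..<n}"
  shows "fwd_lc U S \<subseteq> {..<n}" "S \<subseteq> fwd_lc U S"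
  using assms
proof (induction U arbitrary: S)
  case Nil
  { case 1 then show ?case by simp next case 2 then show ?case by simp }
next
  case (Cons g gs)
  { case 1 then show ?case using Cons.IH(1)[of "lc_step g S"] lc_step_sub(1)[of n g S] by simp
  next
    case 2 then show ?case using Cons.IH(2)[of "lc_step g S"] lc_step_sub[of n g S] by auto }
qed

lemma circuit_loc:
  assumes "\<forall>g\<in>set U. is_gate n g" "A \<subseteq> {..<n}"
    and "rdm n (back_lc U A) v = rdm n (back_lc U A) v'"
  shows "rdm n A (circuit_apply U v) = rdm n A (circuit_apply U v')"
  using assms
proof (induction U arbitrary: v v')
  case Nil
  then show ?case by (simp add: circuit_Nil)
next
  case (Cons g gs)
  have sub: "back_lc gs A \<subseteq> {..<n}" using back_lc_sub(1)[of gs n A] Cons.prems by simp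
  have "rdm n (back_lc gs A) (gate_apply g v) = rdm n (back_lc gs A) (gate_apply g v')"
    by (rule gate_loc[OF _ sub]) (use Cons.prems in simp_all)
  note h = this
  show ?case unfolding circuit_Cons by (rule Cons.IH) (use Cons.prems h in simp_all)
qed

lemma ip_rdm2: "ip n v w = rdm2 n {} w v {} {}"
  by (simp add: ip_def rdm2_def mult.commute)

lemma gate_ip:
  assumes "is_gate n g"
  shows "ip n (gate_apply g v) (gate_apply g w) = ip n v w"
proof -
  obtain Q G where gg: "g = (Q, G)" by (cases g) auto
  show ?thesis unfolding ip_rdm2 gg
    by (rule gate_disj) (use assms gg in auto)
qed

lemma circuit_ip:
  assumes "\<forall>g\<in>set U. is_gate n g"
  shows "ip n (circuit_apply U v) (circuit_apply U w) = ip n v w"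
  using assms by (induction U arbitrary: v w) (simp_all add: circuit_Nil circuit_Cons gate_ip)

lemma circuit_state:
  assumes "\<forall>g\<in>set U. is_gate n g" "is_state n v"
  shows "is_state n (circuit_apply U v)"
  using assms by (induction U arbitrary: v) (simp_all add: circuit_Nil circuit_Cons gate_state)

lemma circuit_linsum:
  "circuit_apply U (\<lambda>b. \<Sum>i<k. c i * vs i b) = (\<lambda>b. \<Sum>i<k. c i * circuit_apply U (vs i) b)"
  by (induction U arbitrary: vs) (simp_all add: circuit_Nil circuit_Cons gate_linsum)

lemma circuit_lin2:
  "circuit_apply U (\<lambda>b. a * v b + c * w b) = (\<lambda>b. a * circuit_apply U v b + c * circuit_apply U w b)"
  by (induction U arbitrary: v w) (simp_all add: circuit_Nil circuit_Cons gate_lin2)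


lemma herm_idem_trace0:
  fixes M :: "'i \<Rightarrow> 'i \<Rightarrow> complex"
  assumes fin: "finite I"
    and herm: "\<And>a b. a \<in> I \<Longrightarrow> b \<in> I \<Longrightarrow> M b a = cnj (M a b)"
    and idem: "\<And>a c. a \<in> I \<Longrightarrow> c \<in> I \<Longrightarrow> (\<Sum>b\<in>I. M a b * M b c) = M a c"
    and tr: "(\<Sum>a\<in>I. M a a) = 0"
    and ab: "a \<in> I" "b \<in> I"
  shows "M a b = 0"
proof -
  have "complex_of_real (\<Sum>a\<in>I. \<Sum>b\<in>I. (cmod (M a b))\<^sup>2) = (\<Sum>a\<in>I. \<Sum>b\<in>I. M a b * cnj (M a b))"
    unfolding of_real_sum by (intro sum.cong refl) (rule complex_norm_square)
  also have "\<dots> = (\<Sum>a\<in>I. \<Sum>b\<in>I. M a b * M b a)"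
  proof (intro sum.cong refl)
    fix a b assume "a \<in> I" "b \<in> I"
    then show "M a b * cnj (M a b) = M a b * M b a" using herm[of a b] by simp
  qed
  also have "\<dots> = (\<Sum>a\<in>I. M a a)"
    by (intro sum.cong refl) (simp add: idem)
  also have "\<dots> = 0" by (rule tr)
  finally have z0: "complex_of_real (\<Sum>a\<in>I. \<Sum>b\<in>I. (cmod (M a b))\<^sup>2) = 0" .
  then have z: "(\<Sum>a\<in>I. \<Sum>b\<in>I. (cmod (M a b))\<^sup>2) = 0" by (simp only: of_real_eq_0_iff)
  have "(\<Sum>b\<in>I. (cmod (M a b))\<^sup>2) = 0"
    using z fin ab(1) by (subst (asm) sum_nonneg_eq_0_iff) (auto intro: sum_nonneg)
  then have "(cmod (M a b))\<^sup>2 = 0"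
    using fin ab(2) by (subst (asm) sum_nonneg_eq_0_iff) auto
  then show ?thesis by simp
qed

lemma gate_coisometry:
  assumes g: "is_gate n (Q, G)" and xy: "x \<subseteq> Q" "y \<subseteq> Q"
  shows "(\<Sum>w\<in>Pow Q. G x w * cnj (G y w)) = (if x = y then 1 else 0)"
proof -
  note gd = is_gateD[OF g]
  define P where "P a c = (\<Sum>w\<in>Pow Q. G a w * cnj (G c w))" for a c
  define M where "M a c = (if a = c then 1 else 0) - P a c" for a c
  have fin: "finite (Pow Q)" using gd(2) by simp
  have PP: "(\<Sum>b\<in>Pow Q. P a b * P b c) = P a c" for a c
  proof -
    have "(\<Sum>b\<in>Pow Q. P a b * P b c) = (\<Sum>b\<in>Pow Q. \<Sum>w\<in>Pow Q. \<Sum>w'\<in>Pow Q. (G a w * cnj (G c w')) * (cnj (G b w) * G b w'))"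
      unfolding P_def sum_product by (intro sum.cong refl) (simp add: algebra_simps)
    also have "\<dots> = (\<Sum>w\<in>Pow Q. \<Sum>w'\<in>Pow Q. (G a w * cnj (G c w')) * (\<Sum>b\<in>Pow Q. cnj (G b w) * G b w'))"
      by (subst sum_swap3) (simp add: sum_distrib_left)
    also have "\<dots> = (\<Sum>w\<in>Pow Q. \<Sum>w'\<in>Pow Q. if w = w' then G a w * cnj (G c w') else 0)"
      by (intro sum.cong refl) (simp add: gd(3))
    also have "\<dots> = P a c" unfolding P_def using fin by (simp add: sum.delta)
    finally show ?thesis .
  qed
  have herm: "M b a = cnj (M a b)" for a b
    unfolding M_def P_def by (simp add: cnj_sum mult.commute)
  have idem: "(\<Sum>b\<in>Pow Q. M a b * M b c) = M a c" if "a \<in> Pow Q" "c \<in> Pow Q" for a c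
  proof -
    have "(\<Sum>b\<in>Pow Q. M a b * M b c)
        = (\<Sum>b\<in>Pow Q. (if a = b then 1 else 0) * (if b = c then 1 else 0)) - (\<Sum>b\<in>Pow Q. (if a = b then 1 else 0) * P b c)
          - (\<Sum>b\<in>Pow Q. P a b * (if b = c then 1 else 0)) + (\<Sum>b\<in>Pow Q. P a b * P b c)"
      unfolding M_def by (simp add: algebra_simps sum.distrib sum_subtractf)
    also have "\<dots> = (if a = c then 1 else 0) - P a c - P a c + P a c"
    proof -
      have s1: "(\<Sum>b\<in>Pow Q. (if a = b then 1 else 0) * (if b = c then 1 else 0)) = (if a = c then 1 else (0::complex))"
        by (subst sum.cong[OF refl, of _ _ "\<lambda>b. if a = b then (if b = c then 1 else 0) else 0"]) (use that fin in \<open>auto simp: sum.delta'\<close>)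
      have s2: "(\<Sum>b\<in>Pow Q. (if a = b then 1 else 0) * P b c) = P a c"
        by (subst sum.cong[OF refl, of _ _ "\<lambda>b. if a = b then P b c else 0"]) (use that fin in \<open>auto simp: sum.delta'\<close>)
      have s3: "(\<Sum>b\<in>Pow Q. P a b * (if b = c then 1 else 0)) = P a c"
        by (subst sum.cong[OF refl, of _ _ "\<lambda>b. if b = c then P a b else 0"]) (use that fin in \<open>auto simp: sum.delta\<close>)
      show ?thesis unfolding s1 s2 s3 PP ..
    qed
    finally show ?thesis unfolding M_def by simp
  qed
  have tr: "(\<Sum>a\<in>Pow Q. M a a) = 0"
  proof -
    have "(\<Sum>a\<in>Pow Q. P a a) = (\<Sum>w\<in>Pow Q. \<Sum>a\<in>Pow Q. cnj (G a w) * G a w)"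
      unfolding P_def by (subst sum.swap) (simp add: mult.commute)
    also have "\<dots> = (\<Sum>w\<in>Pow Q. 1)" by (intro sum.cong refl) (simp add: gd(3))
    finally have "(\<Sum>a\<in>Pow Q. P a a) = of_nat (card (Pow Q))" by simp
    then show ?thesis unfolding M_def by (simp add: sum_subtractf)
  qed
  have "M x y = 0"
  proof (rule herm_idem_trace0[OF fin _ idem tr])
    show "\<And>a b. a \<in> Pow Q \<Longrightarrow> b \<in> Pow Q \<Longrightarrow> M b a = cnj (M a b)" by (rule herm)
  qed (use xy in auto)
  then show ?thesis unfolding M_def P_def by (auto split: if_splits)
qed

definition adjg :: "gate \<Rightarrow> gate" where
  "adjg g = (fst g, \<lambda>a b. cnj (snd g b a))"

lemma adjg_simp: "adjg (Q, G) = (Q, \<lambda>a b. cnj (G b a))"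
  by (simp add: adjg_def)

lemma adjg_adjg: "adjg (adjg g) = g"
  by (cases g) (simp add: adjg_def)

lemma adjg_gate:
  assumes "is_gate n g"
  shows "is_gate n (adjg g)"
proof -
  obtain Q G where gg: "g = (Q, G)" by (cases g) auto
  show ?thesis using assms gate_coisometry[OF assms[unfolded gg]]
    unfolding gg adjg_simp is_gate_def by simp
qed

lemma gate_inv:
  assumes "is_gate n g"
  shows "gate_apply (adjg g) (gate_apply g v) = v"
proof
  fix b
  obtain Q G where gg: "g = (Q, G)" by (cases g) auto
  note gd = is_gateD[OF assms[unfolded gg]]
  have "gate_apply (adjg g) (gate_apply g v) b
      = (\<Sum>y'\<in>Pow Q. \<Sum>y\<in>Pow Q. cnj (G y' (b \<inter> Q)) * (G y' y * v ((b - Q) \<union> y)))"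
    unfolding gg adjg_simp gate_apply_simp
  proof (intro sum.cong refl)
    fix y' assume y': "y' \<in> Pow Q"
    have e1: "((b - Q) \<union> y') \<inter> Q = y'" using y' by blast
    have e2: "\<And>y. (((b - Q) \<union> y') - Q) \<union> y = (b - Q) \<union> y" using y' by blast
    show "cnj (G y' (b \<inter> Q)) * (\<Sum>y\<in>Pow Q. G (((b - Q) \<union> y') \<inter> Q) y * v (((b - Q) \<union> y') - Q \<union> y))
        = (\<Sum>y\<in>Pow Q. cnj (G y' (b \<inter> Q)) * (G y' y * v ((b - Q) \<union> y)))"
      unfolding e1 e2 by (simp add: sum_distrib_left)
  qed
  also have "\<dots> = (\<Sum>y\<in>Pow Q. (\<Sum>y'\<in>Pow Q. cnj (G y' (b \<inter> Q)) * G y' y) * v ((b - Q) \<union> y))"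
    by (subst sum.swap) (simp add: sum_distrib_right mult.assoc)
  also have "\<dots> = (\<Sum>y\<in>Pow Q. if b \<inter> Q = y then v ((b - Q) \<union> y) else 0)"
    by (intro sum.cong refl) (simp add: gd(3))
  also have "\<dots> = v ((b - Q) \<union> (b \<inter> Q))" using gd(2) by (simp add: sum.delta)
  also have "(b - Q) \<union> (b \<inter> Q) = b" by blast
  finally show "gate_apply (adjg g) (gate_apply g v) b = v b" .
qed

definition cinv :: "gate list \<Rightarrow> gate list" where
  "cinv U = rev (map adjg U)"

lemma cinv_gates:
  assumes "\<forall>g\<in>set U. is_gate n g"
  shows "\<forall>g\<in>set (cinv U). is_gate n g"
  using assms by (auto simp: cinv_def adjg_gate)

lemma cinv_left:
  assumes "\<forall>g\<in>set U. is_gate n g"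
  shows "circuit_apply (cinv U) (circuit_apply U v) = v"
  using assms
proof (induction U arbitrary: v)
  case Nil then show ?case by (simp add: cinv_def circuit_Nil)
next
  case (Cons g gs)
  have "circuit_apply (cinv (g # gs)) (circuit_apply (g # gs) v)
      = gate_apply (adjg g) (circuit_apply (cinv gs) (circuit_apply gs (gate_apply g v)))"
    by (simp add: cinv_def circuit_append circuit_Cons circuit_Nil)
  also have "\<dots> = gate_apply (adjg g) (gate_apply g v)" using Cons by simp
  also have "\<dots> = v" using Cons.prems gate_inv[of n g] by simp
  finally show ?case .
qed

lemma cinv_right:
  assumes "\<forall>g\<in>set U. is_gate n g"
  shows "circuit_apply U (circuit_apply (cinv U) v) = v"
  using assms
proof (induction U arbitrary: v)
  case Nil then show ?case by (simp add: cinv_def circuit_Nil)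
next
  case (Cons g gs)
  have "circuit_apply (g # gs) (circuit_apply (cinv (g # gs)) v)
      = circuit_apply gs (gate_apply g (gate_apply (adjg g) (circuit_apply (cinv gs) v)))"
    by (simp add: cinv_def circuit_append circuit_Cons circuit_Nil)
  also have "gate_apply g (gate_apply (adjg g) (circuit_apply (cinv gs) v)) = circuit_apply (cinv gs) v"
    using gate_inv[OF adjg_gate[of n g]] Cons.prems by (simp add: adjg_adjg)
  finally show ?case using Cons by simp
qed

lemma back_lc_append: "back_lc (xs @ ys) S = back_lc xs (back_lc ys S)"
  by (induction xs) auto

lemma lc_step_adjg: "lc_step (adjg g) S = lc_step g S"
  by (simp add: lc_step_def adjg_def)

lemma back_lc_cinv: "back_lc (cinv U) S = fwd_lc U S"
proof (induction U arbitrary: S)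
  case Nil then show ?case by (simp add: cinv_def)
next
  case (Cons g gs)
  show ?case using Cons by (simp add: cinv_def back_lc_append lc_step_adjg)
qed

lemma back_lc_empty: "back_lc U {} = {}"
  by (induction U) (auto simp: lc_step_def)

lemma fwd_lc_empty: "fwd_lc U {} = {}"
  by (induction U) (auto simp: lc_step_def)

lemma blowup_bound:
  assumes "\<forall>g\<in>set U. is_gate n g" "S \<subseteq> {..<n}"
  shows "card (back_lc U S) \<le> blowup n U * card S \<and> card (fwd_lc U S) \<le> blowup n U * card S"
proof -
  have ex: "\<exists>B. \<forall>S. S \<subseteq> {..<n} \<longrightarrow> card (back_lc U S) \<le> B * card S \<and> card (fwd_lc U S) \<le> B * card S"
  proof (intro exI allI impI)
    fix S :: "nat set" assume S: "S \<subseteq> {..<n}"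
    show "card (back_lc U S) \<le> n * card S \<and> card (fwd_lc U S) \<le> n * card S"
    proof (cases "S = {}")
      case True then show ?thesis by (simp add: back_lc_empty fwd_lc_empty)
    next
      case False
      have fS: "finite S" using S finite_subset by blast
      then have "card S \<ge> 1" using False by (simp add: Suc_le_eq card_gt_0_iff)
      then have n: "n \<le> n * card S" by simp
      have "card (back_lc U S) \<le> n" using card_mono[OF _ back_lc_sub(1)[OF assms(1) S]] by simp
      moreover have "card (fwd_lc U S) \<le> n" using card_mono[OF _ fwd_lc_sub(1)[OF assms(1) S]] by simp
      ultimately show ?thesis using n by linarith
    qed
  qed
  show ?thesis using LeastI_ex[OF ex] assms(2) unfolding blowup_def by blast
qed


lemma i_pow_mod4: "\<i> ^ (k mod 4) = \<i> ^ k"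
proof -
  have e: "4 * (k div 4) + k mod 4 = k" by simp
  have "\<i> ^ k = \<i> ^ (4 * (k div 4) + k mod 4)" by (simp only: e)
  also have "\<dots> = (\<i> ^ 4) ^ (k div 4) * \<i> ^ (k mod 4)" by (simp only: power_add power_mult)
  also have "\<dots> = \<i> ^ (k mod 4)"
  proof -
    have "\<i> ^ 4 = (1::complex)" by (simp add: power_numeral_reduce)
    then show ?thesis by simp
  qed
  finally show ?thesis by simp
qed

lemma k4_cases: "(k::nat) < 4 \<Longrightarrow> k = 0 \<or> k = 1 \<or> k = 2 \<or> k = 3" by arith

lemma i_pow_inj:
  assumes "k < 4" "k' < 4" "\<i> ^ k = \<i> ^ k'"
  shows "k = k'"
  using k4_cases[OF assms(1)] k4_cases[OF assms(2)] assms(3)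
  by (auto simp: power_numeral_reduce complex_eq_iff)

lemma i_pow_1: "k < 4 \<Longrightarrow> \<i> ^ k = 1 \<Longrightarrow> k = 0"
  using i_pow_inj[of k 0] by simp

definition pmul :: "pauli \<Rightarrow> pauli \<Rightarrow> pauli" where
  "pmul P Q = (case P of (k1, x1, z1) \<Rightarrow> case Q of (k2, x2, z2) \<Rightarrow>
      ((k1 + k2 + 2 * card (z1 \<inter> x2)) mod 4, sym_diff x1 x2, sym_diff z1 z2))"

lemma pmul_apply:
  assumes "is_pauli n P" "is_pauli n Q"
  shows "pauli_apply P (pauli_apply Q v) = pauli_apply (pmul P Q) v"
proof -
  obtain k1 x1 z1 where P: "P = (k1, x1, z1)" by (cases P) auto
  obtain k2 x2 z2 where Q: "Q = (k2, x2, z2)" by (cases Q) auto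
  have f: "finite z1" "finite z2" using assms P Q by (auto simp: is_pauli_def intro: finite_subset)
  have "\<i> ^ ((k1 + k2 + 2 * card (z1 \<inter> x2)) mod 4) = \<i> ^ (k1 + k2) * (-1) ^ card (z1 \<inter> x2)"
    unfolding i_pow_mod4 by (simp add: power_add power_mult)
  then show ?thesis unfolding P Q pauli_comp[OF f] pmul_def
    by (simp add: pauli_phase[of "(k1 + k2 + 2 * card (z1 \<inter> x2)) mod 4"])
qed

lemma pmul_pauli:
  assumes "is_pauli n P" "is_pauli n Q"
  shows "is_pauli n (pmul P Q)"
  using assms by (cases P, cases Q) (auto simp: is_pauli_def pmul_def)

lemma pauli_sumset:
  "pauli_apply P (\<lambda>b. \<Sum>t\<in>T. f t b) = (\<lambda>b. \<Sum>t\<in>T. pauli_apply P (f t) b)"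
  by (cases P) (simp add: pauli_apply_simp fun_eq_iff sum_distrib_left)

lemma pauli_scale:
  "pauli_apply P (\<lambda>b. c * f b) = (\<lambda>b. c * pauli_apply P f b)"
  by (cases P) (simp add: pauli_apply_simp fun_eq_iff algebra_simps)

definition delta :: "nat set \<Rightarrow> vec" where
  "delta c = (\<lambda>b. if b = c then 1 else 0)"

lemma ip_delta:
  assumes "c \<subseteq> {..<n}"
  shows "ip n (delta c) w = w c"
proof -
  have "ip n (delta c) w = (\<Sum>b\<in>Pow {..<n}. if b = c then w b else 0)"
    unfolding ip_def delta_def by (intro sum.cong) auto
  then show ?thesis using assms by (simp add: sum.delta)
qed

lemma pauli_expand:
  assumes "is_pauli n P" "is_state n w" "a \<subseteq> {..<n}"
  shows "pauli_apply P w a = (\<Sum>c\<in>Pow {..<n}. w c * pauli_apply P (delta c) a)"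
proof -
  obtain k x z where P: "P = (k, x, z)" by (cases P) auto
  have x: "x \<subseteq> {..<n}" using assms(1) P by (simp add: is_pauli_def)
  have "(\<Sum>c\<in>Pow {..<n}. w c * pauli_apply P (delta c) a)
      = (\<Sum>c\<in>Pow {..<n}. if c = sym_diff a x then \<i> ^ k * (-1) ^ card (z \<inter> sym_diff a x) * w c else 0)"
    unfolding P pauli_apply_simp delta_def by (intro sum.cong refl) auto
  also have "\<dots> = \<i> ^ k * (-1) ^ card (z \<inter> sym_diff a x) * w (sym_diff a x)"
    using assms(3) x by (auto simp: sum.delta)
  finally show ?thesis unfolding P pauli_apply_simp by simp
qed

lemma pauli_trace:
  assumes "is_pauli n (k, x, z)"
  shows "(\<Sum>a\<in>Pow {..<n}. pauli_apply (k, x, z) (delta a) a) = (if x = {} \<and> z = {} then \<i> ^ k * 2 ^ n else 0)"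
proof (cases "x = {}")
  case False
  have "pauli_apply (k, x, z) (delta a) a = 0" for a
  proof -
    have "sym_diff a x \<noteq> a" using False by blast
    then show ?thesis by (simp add: pauli_apply_simp delta_def)
  qed
  then show ?thesis using False by simp
next
  case True
  have z: "z \<subseteq> {..<n}" using assms by (simp add: is_pauli_def)
  have "(\<Sum>a\<in>Pow {..<n}. pauli_apply (k, x, z) (delta a) a) = \<i> ^ k * (\<Sum>a\<in>Pow {..<n}. (-1) ^ card (a \<inter> z))"
    unfolding True pauli_apply_simp delta_def by (simp add: sum_distrib_left Int_commute)
  also have "\<dots> = (if z = {} then \<i> ^ k * 2 ^ n else 0)"
  proof (cases "z = {}")
    case True then show ?thesis using char_sum_empty[of "{..<n}"] by simp
  next
    case False then show ?thesis using char_sum_zero[of "{..<n}" z] z by simp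
  qed
  finally show ?thesis using True by simp
qed

locale stabctx =
  fixes n :: nat and \<phi> :: vec
  assumes stab: "is_stabilizer_state n \<phi>"
begin

abbreviation "S \<equiv> stab_group n \<phi>"

lemma phi_state: "is_state n \<phi>"
  using stab by (simp add: is_stabilizer_state_def is_pure_state_def)

lemma phi_norm: "ip n \<phi> \<phi> = 1"
proof -
  have "(\<Sum>b\<in>Pow {..<n}. (cmod (\<phi> b))\<^sup>2) = 1"
    using stab by (simp add: is_stabilizer_state_def is_pure_state_def)
  then have "complex_of_real (\<Sum>b\<in>Pow {..<n}. (cmod (\<phi> b))\<^sup>2) = 1" by simp
  moreover have "complex_of_real (\<Sum>b\<in>Pow {..<n}. (cmod (\<phi> b))\<^sup>2) = ip n \<phi> \<phi>"
    unfolding ip_def of_real_sum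
  proof (intro sum.cong refl)
    fix b show "complex_of_real ((cmod (\<phi> b))\<^sup>2) = cnj (\<phi> b) * \<phi> b"
      using complex_norm_square[of "\<phi> b"] by (simp only: mult.commute)
  qed
  ultimately show ?thesis by simp
qed

lemma phi_nz: "\<exists>b0\<in>Pow {..<n}. \<phi> b0 \<noteq> 0"
proof (rule ccontr)
  assume "\<not> ?thesis"
  then have "ip n \<phi> \<phi> = 0" by (simp add: ip_def)
  then show False using phi_norm by simp
qed

lemma scal_phi:
  assumes "(\<lambda>b. c * \<phi> b) = \<phi>"
  shows "c = 1"
proof -
  obtain b0 where b0: "\<phi> b0 \<noteq> 0" using phi_nz by blast
  have "c * \<phi> b0 = \<phi> b0" using fun_cong[OF assms, of b0] by simp
  then show ?thesis using b0 by simp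
qed

lemma S_mem: "s \<in> S \<longleftrightarrow> is_pauli n s \<and> pauli_apply s \<phi> = \<phi>"
  by (simp add: stab_group_def)

lemma S_fin: "finite S"
proof -
  have "S \<subseteq> {..<4} \<times> Pow {..<n} \<times> Pow {..<n}"
    by (auto simp: stab_group_def is_pauli_def)
  then show ?thesis by (rule finite_subset) simp
qed

lemma S_card: "card S = 2 ^ n"
  using stab by (simp add: is_stabilizer_state_def)

lemma S_pauli: "s \<in> S \<Longrightarrow> is_pauli n s"
  by (simp add: S_mem)

lemma S_fix: "s \<in> S \<Longrightarrow> pauli_apply s \<phi> = \<phi>"
  by (simp add: S_mem)

lemma S_inv:
  assumes "s \<in> S"
  shows "pauli_apply s (pauli_apply s v) = v"
proof -
  obtain k x z where s: "s = (k, x, z)" by (cases s) auto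
  have fz: "finite z" using S_pauli[OF assms] s by (auto simp: is_pauli_def intro: finite_subset)
  define c where "c = \<i> ^ (k + k) * (-1) ^ card (z \<inter> x)"
  have sq: "pauli_apply s (pauli_apply s w) = (\<lambda>b. c * w b)" for w
    unfolding s c_def pauli_square[OF fz] by simp
  have "(\<lambda>b. c * \<phi> b) = \<phi>" using sq[of \<phi>] S_fix[OF assms] by simp
  then have "c = 1" by (rule scal_phi)
  then show ?thesis using sq[of v] by simp
qed

lemma S_herm:
  assumes "s \<in> S"
  shows "ip n (pauli_apply s u) w = ip n u (pauli_apply s w)"
proof -
  have "ip n (pauli_apply s u) w = ip n (pauli_apply s u) (pauli_apply s (pauli_apply s w))"
    by (simp add: S_inv[OF assms])
  also have "\<dots> = ip n u (pauli_apply s w)" by (rule pauli_unitary[OF S_pauli[OF assms]])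
  finally show ?thesis .
qed

lemma S_mul: "s \<in> S \<Longrightarrow> t \<in> S \<Longrightarrow> pmul s t \<in> S"
  unfolding S_mem using pmul_apply pmul_pauli by metis

lemma S_det:
  assumes "(k, x, z) \<in> S" "(k', x, z) \<in> S"
  shows "k = k'"
proof -
  have "pauli_apply (k, x, z) \<phi> = \<phi>" "pauli_apply (k', x, z) \<phi> = \<phi>" using assms S_fix by blast+
  then have e: "(\<lambda>b. \<i> ^ k * pauli_apply (0, x, z) \<phi> b) = (\<lambda>b. \<i> ^ k' * pauli_apply (0, x, z) \<phi> b)"
    using pauli_phase[of k x z \<phi>] pauli_phase[of k' x z \<phi>] by simp
  have "pauli_apply (0, x, z) \<phi> \<noteq> (\<lambda>b. 0)"
  proof
    assume "pauli_apply (0, x, z) \<phi> = (\<lambda>b. 0)"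
    then have "pauli_apply (k, x, z) \<phi> = (\<lambda>b. 0)" using pauli_phase[of k x z \<phi>] by simp
    then have "\<phi> = (\<lambda>b. 0)" using S_fix[OF assms(1)] by simp
    then show False using phi_nz by simp
  qed
  then obtain b where "pauli_apply (0, x, z) \<phi> b \<noteq> 0" by auto
  then have "\<i> ^ k = \<i> ^ k'" using fun_cong[OF e, of b] by simp
  moreover have "k < 4" "k' < 4" using assms S_pauli by (auto simp: is_pauli_def)
  ultimately show ?thesis using i_pow_inj by blast
qed

lemma S_mul_inj:
  assumes "s \<in> S"
  shows "inj_on (pmul s) S"
proof (rule inj_onI)
  fix t t' assume t: "t \<in> S" and t': "t' \<in> S" and e: "pmul s t = pmul s t'"
  obtain k x z where s: "s = (k, x, z)" by (cases s) auto
  obtain k1 x1 z1 where t1: "t = (k1, x1, z1)" by (cases t) auto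
  obtain k2 x2 z2 where t2: "t' = (k2, x2, z2)" by (cases t') auto
  have "sym_diff x x1 = sym_diff x x2" "sym_diff z z1 = sym_diff z z2"
    using e unfolding s t1 t2 pmul_def by simp_all
  then have "x1 = x2" "z1 = z2" by blast+
  then have "k1 = k2" using S_det t t' t1 t2 by blast
  then show "t = t'" using t1 t2 \<open>x1 = x2\<close> \<open>z1 = z2\<close> by simp
qed

lemma S_mul_img:
  assumes "s \<in> S"
  shows "pmul s ` S = S"
  by (rule endo_inj_surj[OF S_fin]) (use S_mul[OF assms] S_mul_inj[OF assms] in auto)

lemma S_mul_reindex:
  assumes "s \<in> S"
  shows "(\<Sum>t\<in>S. f (pmul s t)) = (\<Sum>t\<in>S. f t)"
proof -
  have "(\<Sum>t\<in>pmul s ` S. f t) = (\<Sum>t\<in>S. f (pmul s t))"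
    by (simp add: sum.reindex[OF S_mul_inj[OF assms]])
  then show ?thesis using S_mul_img[OF assms] by simp
qed

definition Pi :: "vec \<Rightarrow> vec" where
  "Pi w = (\<lambda>a. (1 / 2 ^ n) * (\<Sum>s\<in>S. pauli_apply s w a))"

lemma Pi_phi: "Pi \<phi> = \<phi>"
  unfolding Pi_def by (simp add: S_fix S_card)

lemma Pi_state: "is_state n w \<Longrightarrow> is_state n (Pi w)"
  unfolding Pi_def is_state_def
  using pauli_state[OF S_pauli] by (simp add: is_state_def)

lemma Pi_absorb:
  assumes "s \<in> S"
  shows "pauli_apply s (Pi w) = Pi w"
proof -
  have "pauli_apply s (Pi w) = (\<lambda>a. (1 / 2 ^ n) * (\<Sum>t\<in>S. pauli_apply (pmul s t) w a))"
    unfolding Pi_def pauli_scale pauli_sumset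
    using pmul_apply[OF S_pauli[OF assms] S_pauli] by simp
  also have "\<dots> = Pi w"
  proof -
    have "(\<Sum>t\<in>S. pauli_apply (pmul s t) w a) = (\<Sum>t\<in>S. pauli_apply t w a)" for a
    proof -
      have "(\<Sum>t\<in>S. pauli_apply t w a) = (\<Sum>t\<in>S. pauli_apply (pmul s t) w a)"
        using S_mul_reindex[OF assms, of "\<lambda>t. pauli_apply t w a"] by simp
      then show ?thesis by simp
    qed
    then show ?thesis unfolding Pi_def by simp
  qed
  finally show ?thesis .
qed

end


lemma ip_delta2:
  assumes "c \<subseteq> {..<n}"
  shows "ip n w (delta c) = cnj (w c)"
proof -
  have "ip n w (delta c) = (\<Sum>b\<in>Pow {..<n}. if b = c then cnj (w b) else 0)"
    unfolding ip_def delta_def by (intro sum.cong) auto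
  then show ?thesis using assms by (simp add: sum.delta)
qed

lemma delta_state: "c \<subseteq> {..<n} \<Longrightarrow> is_state n (delta c)"
  by (auto simp: is_state_def delta_def)

context stabctx begin

lemma Pi_lin:
  assumes "is_state n w" "a \<subseteq> {..<n}"
  shows "Pi w a = (\<Sum>c\<in>Pow {..<n}. w c * Pi (delta c) a)"
proof -
  have "Pi w a = (1 / 2 ^ n) * (\<Sum>s\<in>S. \<Sum>c\<in>Pow {..<n}. w c * pauli_apply s (delta c) a)"
    unfolding Pi_def using pauli_expand[OF S_pauli assms] by simp
  also have "\<dots> = (\<Sum>c\<in>Pow {..<n}. w c * Pi (delta c) a)"
    unfolding Pi_def by (subst sum.swap) (simp add: sum_distrib_left algebra_simps)
  finally show ?thesis .
qed

lemma Pi_idem: "Pi (Pi w) = Pi w"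
proof
  fix a
  have "Pi (Pi w) a = (1 / 2 ^ n) * (\<Sum>s\<in>S. Pi w a)"
    unfolding Pi_def[of "Pi w"] using Pi_absorb by simp
  also have "\<dots> = Pi w a" using S_card by simp
  finally show "Pi (Pi w) a = Pi w a" .
qed

lemma S_delta_herm:
  assumes "s \<in> S" "a \<subseteq> {..<n}" "b \<subseteq> {..<n}"
  shows "pauli_apply s (delta a) b = cnj (pauli_apply s (delta b) a)"
proof -
  have "ip n (pauli_apply s (delta b)) (delta a) = ip n (delta b) (pauli_apply s (delta a))"
    by (rule S_herm[OF assms(1)])
  then show ?thesis using ip_delta[OF assms(3)] ip_delta2[OF assms(2)] by simp
qed

lemma Pi_herm:
  assumes "a \<subseteq> {..<n}" "b \<subseteq> {..<n}"
  shows "Pi (delta a) b = cnj (Pi (delta b) a)"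
  unfolding Pi_def using S_delta_herm[OF _ assms] by (simp add: cnj_sum)

lemma id_in_S: "(0, {}, {}) \<in> S"
  by (simp add: S_mem pauli_id is_pauli_def)

lemma S_trace:
  assumes "s \<in> S"
  shows "(\<Sum>a\<in>Pow {..<n}. pauli_apply s (delta a) a) = (if s = (0, {}, {}) then 2 ^ n else 0)"
proof -
  obtain k x z where s: "s = (k, x, z)" by (cases s) auto
  have tr: "(\<Sum>a\<in>Pow {..<n}. pauli_apply s (delta a) a) = (if x = {} \<and> z = {} then \<i> ^ k * 2 ^ n else 0)"
    unfolding s by (rule pauli_trace) (use S_pauli[OF assms] s in simp)
  show ?thesis
  proof (cases "x = {} \<and> z = {}")
    case True
    have "(\<lambda>b. \<i> ^ k * \<phi> b) = \<phi>"
      using S_fix[OF assms] pauli_phase[of k "{}" "{}" \<phi>] True s by (simp add: pauli_id)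
    then have "\<i> ^ k = 1" by (rule scal_phi)
    moreover have "k < 4" using S_pauli[OF assms] s by (simp add: is_pauli_def)
    ultimately have "k = 0" using i_pow_1 by blast
    then show ?thesis using tr True s by simp
  next
    case False
    then show ?thesis using tr s by auto
  qed
qed

lemma Pi_trace: "(\<Sum>a\<in>Pow {..<n}. Pi (delta a) a) = 1"
proof -
  have "(\<Sum>a\<in>Pow {..<n}. Pi (delta a) a) = (1 / 2 ^ n) * (\<Sum>s\<in>S. \<Sum>a\<in>Pow {..<n}. pauli_apply s (delta a) a)"
    unfolding Pi_def by (subst sum.swap) (simp add: sum_distrib_left)
  also have "\<dots> = (1 / 2 ^ n) * (\<Sum>s\<in>S. if s = (0, {}, {}) then 2 ^ n else 0)"
    using S_trace by simp
  also have "\<dots> = 1" using id_in_S S_fin by (simp add: sum.delta)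
  finally show ?thesis .
qed

lemma Pi_delta:
  assumes "a \<subseteq> {..<n}" "c \<subseteq> {..<n}"
  shows "Pi (delta c) a = \<phi> a * cnj (\<phi> c)"
proof -
  define M where "M a c = Pi (delta c) a - \<phi> a * cnj (\<phi> c)" for a c
  have fin: "finite (Pow {..<n})" by simp
  have herm: "M b a = cnj (M a b)" if "a \<in> Pow {..<n}" "b \<in> Pow {..<n}" for a b
    unfolding M_def using Pi_herm[of b a] that by simp
  have phi_sum: "(\<Sum>b\<in>Pow {..<n}. cnj (\<phi> b) * \<phi> b) = 1" using phi_norm by (simp add: ip_def)
  have idem: "(\<Sum>b\<in>Pow {..<n}. M a b * M b c) = M a c" if a: "a \<in> Pow {..<n}" and c: "c \<in> Pow {..<n}" for a c
  proof -
    have T1: "(\<Sum>b\<in>Pow {..<n}. Pi (delta b) a * Pi (delta c) b) = Pi (delta c) a"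
    proof -
      have "(\<Sum>b\<in>Pow {..<n}. Pi (delta b) a * Pi (delta c) b) = Pi (Pi (delta c)) a"
        using Pi_lin[OF Pi_state[OF delta_state], of c a] a c by (simp add: mult.commute)
      then show ?thesis by (simp add: Pi_idem)
    qed
    have T2: "(\<Sum>b\<in>Pow {..<n}. Pi (delta b) a * (\<phi> b * cnj (\<phi> c))) = \<phi> a * cnj (\<phi> c)"
    proof -
      have "(\<Sum>b\<in>Pow {..<n}. Pi (delta b) a * (\<phi> b * cnj (\<phi> c))) = (\<Sum>b\<in>Pow {..<n}. \<phi> b * Pi (delta b) a) * cnj (\<phi> c)"
        unfolding sum_distrib_right by (intro sum.cong refl) (simp add: algebra_simps)
      also have "\<dots> = Pi \<phi> a * cnj (\<phi> c)" using Pi_lin[OF phi_state, of a] a by simp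
      finally have "(\<Sum>b\<in>Pow {..<n}. Pi (delta b) a * (\<phi> b * cnj (\<phi> c))) = Pi \<phi> a * cnj (\<phi> c)" .
      then show ?thesis by (simp add: Pi_phi)
    qed
    have T3: "(\<Sum>b\<in>Pow {..<n}. \<phi> a * cnj (\<phi> b) * Pi (delta c) b) = \<phi> a * cnj (\<phi> c)"
    proof -
      have "(\<Sum>b\<in>Pow {..<n}. \<phi> a * cnj (\<phi> b) * Pi (delta c) b) = \<phi> a * cnj (\<Sum>b\<in>Pow {..<n}. \<phi> b * Pi (delta b) c)"
        unfolding cnj_sum sum_distrib_left
      proof (intro sum.cong refl)
        fix b assume b: "b \<in> Pow {..<n}"
        have "Pi (delta c) b = cnj (Pi (delta b) c)" using Pi_herm[of c b] b c by simp
        then show "\<phi> a * cnj (\<phi> b) * Pi (delta c) b = \<phi> a * cnj (\<phi> b * Pi (delta b) c)" by simp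
      qed
      also have "(\<Sum>b\<in>Pow {..<n}. \<phi> b * Pi (delta b) c) = \<phi> c"
        using Pi_lin[OF phi_state, of c] c Pi_phi by simp
      finally show ?thesis .
    qed
    have T4: "(\<Sum>b\<in>Pow {..<n}. \<phi> a * cnj (\<phi> b) * (\<phi> b * cnj (\<phi> c))) = \<phi> a * cnj (\<phi> c)"
    proof -
      have "(\<Sum>b\<in>Pow {..<n}. \<phi> a * cnj (\<phi> b) * (\<phi> b * cnj (\<phi> c))) = \<phi> a * cnj (\<phi> c) * (\<Sum>b\<in>Pow {..<n}. cnj (\<phi> b) * \<phi> b)"
        by (simp add: sum_distrib_left algebra_simps)
      then show ?thesis using phi_sum by simp
    qed
    have "(\<Sum>b\<in>Pow {..<n}. M a b * M b c)
        = (\<Sum>b\<in>Pow {..<n}. Pi (delta b) a * Pi (delta c) b) - (\<Sum>b\<in>Pow {..<n}. Pi (delta b) a * (\<phi> b * cnj (\<phi> c)))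
          - (\<Sum>b\<in>Pow {..<n}. \<phi> a * cnj (\<phi> b) * Pi (delta c) b) + (\<Sum>b\<in>Pow {..<n}. \<phi> a * cnj (\<phi> b) * (\<phi> b * cnj (\<phi> c)))"
      unfolding M_def by (simp add: algebra_simps sum.distrib sum_subtractf)
    also have "\<dots> = M a c" unfolding T1 T2 T3 T4 M_def by simp
    finally show ?thesis .
  qed
  have tr: "(\<Sum>a\<in>Pow {..<n}. M a a) = 0"
  proof -
    have "(\<Sum>a\<in>Pow {..<n}. M a a) = (\<Sum>a\<in>Pow {..<n}. Pi (delta a) a) - (\<Sum>a\<in>Pow {..<n}. cnj (\<phi> a) * \<phi> a)"
      unfolding M_def by (simp add: sum_subtractf mult.commute)
    then show ?thesis using Pi_trace phi_sum by simp
  qed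
  have "M a c = 0"
  proof (rule herm_idem_trace0[OF fin _ idem tr])
    show "\<And>a b. a \<in> Pow {..<n} \<Longrightarrow> b \<in> Pow {..<n} \<Longrightarrow> M b a = cnj (M a b)" by (rule herm)
  qed (use assms in auto)
  then show ?thesis unfolding M_def by simp
qed

lemma Pi_formula:
  assumes "is_state n w"
  shows "Pi w = (\<lambda>a. ip n \<phi> w * \<phi> a)"
proof
  fix a
  show "Pi w a = ip n \<phi> w * \<phi> a"
  proof (cases "a \<subseteq> {..<n}")
    case True
    have "Pi w a = (\<Sum>c\<in>Pow {..<n}. w c * (\<phi> a * cnj (\<phi> c)))"
      using Pi_lin[OF assms True] Pi_delta[OF True] by simp
    also have "\<dots> = ip n \<phi> w * \<phi> a" unfolding ip_def sum_distrib_right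
      by (intro sum.cong refl) (simp add: algebra_simps)
    finally show ?thesis .
  next
    case False
    have "Pi w a = 0" using Pi_state[OF assms] False by (simp add: is_state_def)
    moreover have "\<phi> a = 0" using phi_state False by (simp add: is_state_def)
    ultimately show ?thesis by simp
  qed
qed

lemma commute_eigen:
  assumes Q: "is_pauli n Q"
    and comm: "\<And>s v. s \<in> S \<Longrightarrow> pauli_apply s (pauli_apply Q v) = pauli_apply Q (pauli_apply s v)"
  shows "pauli_apply Q \<phi> = (\<lambda>a. ip n \<phi> (pauli_apply Q \<phi>) * \<phi> a)"
proof -
  have "pauli_apply Q \<phi> = pauli_apply Q (Pi \<phi>)" by (simp add: Pi_phi)
  also have "\<dots> = Pi (pauli_apply Q \<phi>)"
    unfolding Pi_def pauli_scale pauli_sumset using comm by simp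
  also have "\<dots> = (\<lambda>a. ip n \<phi> (pauli_apply Q \<phi>) * \<phi> a)"
    by (rule Pi_formula[OF pauli_state[OF Q phi_state]])
  finally show ?thesis .
qed

end


lemma rank1:
  fixes F :: "'i \<Rightarrow> 'x \<Rightarrow> complex"
  assumes fin: "finite I"
    and h: "\<And>x y. x \<in> X \<Longrightarrow> y \<in> X \<Longrightarrow> (\<Sum>i\<in>I. F i x * cnj (F i y)) = u x * cnj (u y)"
    and x: "x \<in> X" and x0: "x0 \<in> X" and i: "i \<in> I"
  shows "u x0 * F i x = u x * F i x0"
proof -
  define g where "g i = u x0 * F i x - u x * F i x0" for i
  have "(\<Sum>i\<in>I. g i * cnj (g i))
      = (u x0 * cnj (u x0)) * (\<Sum>i\<in>I. F i x * cnj (F i x)) - (u x0 * cnj (u x)) * (\<Sum>i\<in>I. F i x * cnj (F i x0))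
        - (u x * cnj (u x0)) * (\<Sum>i\<in>I. F i x0 * cnj (F i x)) + (u x * cnj (u x)) * (\<Sum>i\<in>I. F i x0 * cnj (F i x0))"
    unfolding g_def by (simp add: sum_distrib_left sum.distrib sum_subtractf algebra_simps)
  also have "\<dots> = 0" unfolding h[OF x x] h[OF x x0] h[OF x0 x] h[OF x0 x0] by (simp add: algebra_simps)
  finally have z: "(\<Sum>i\<in>I. g i * cnj (g i)) = 0" .
  have "complex_of_real (\<Sum>i\<in>I. (cmod (g i))\<^sup>2) = (\<Sum>i\<in>I. g i * cnj (g i))"
    unfolding of_real_sum by (intro sum.cong refl) (rule complex_norm_square)
  then have "(\<Sum>i\<in>I. (cmod (g i))\<^sup>2) = 0" using z by (simp only: of_real_eq_0_iff)
  then have "(cmod (g i))\<^sup>2 = 0" using fin i by (subst (asm) sum_nonneg_eq_0_iff) auto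
  then show ?thesis unfolding g_def by simp
qed

definition kf :: "nat \<Rightarrow> nat set \<Rightarrow> op list \<Rightarrow> vec \<Rightarrow> nat \<Rightarrow> nat set \<Rightarrow> nat set \<Rightarrow> complex" where
  "kf n F Ks v j a x = (\<Sum>z\<in>Pow ({..<n} - F). (Ks ! j) x z * v (z \<union> a))"

lemma kf_add: "kf n F Ks (\<lambda>b. u b + w b) j a x = kf n F Ks u j a x + kf n F Ks w j a x"
  by (simp add: kf_def algebra_simps sum.distrib)

lemma kf_cong:
  assumes "a \<subseteq> F" "F \<subseteq> {..<n}" "\<And>b. b \<subseteq> {..<n} \<Longrightarrow> u b = c * w b"
  shows "kf n F Ks u j a x = c * kf n F Ks w j a x"
  unfolding kf_def sum_distrib_left
proof (intro sum.cong refl)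
  fix z assume "z \<in> Pow ({..<n} - F)"
  then have "z \<union> a \<subseteq> {..<n}" using assms by auto
  then show "(Ks ! j) x z * u (z \<union> a) = c * ((Ks ! j) x z * w (z \<union> a))" using assms(3) by simp
qed

lemma kraus_expand:
  assumes F: "F \<subseteq> {..<n}" and x: "x \<subseteq> {..<n}" and y: "y \<subseteq> {..<n}"
  shows "kraus_apply n F Ks (ptrace n F v) x y
       = (\<Sum>j<length Ks. \<Sum>a\<in>Pow F. kf n F Ks v j a x * cnj (kf n F Ks v j a y))"
proof -
  define A' where "A' = {..<n} - F"
  have NA: "{..<n} - A' = F" using F unfolding A'_def by blast
  have "kraus_apply n F Ks (ptrace n F v) x y
      = (\<Sum>j<length Ks. \<Sum>u\<in>Pow A'. \<Sum>w\<in>Pow A'. (Ks ! j) x u * rdm n A' v u w * cnj ((Ks ! j) y w))"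
    unfolding kraus_apply_def ptrace_def A'_def using x y by (simp add: sum_list_sum_nth atLeast0LessThan)
  also have "\<dots> = (\<Sum>j<length Ks. \<Sum>a\<in>Pow F. kf n F Ks v j a x * cnj (kf n F Ks v j a y))"
  proof (rule sum.cong[OF refl])
    fix j
    have "(\<Sum>u\<in>Pow A'. \<Sum>w\<in>Pow A'. (Ks ! j) x u * rdm n A' v u w * cnj ((Ks ! j) y w))
        = (\<Sum>u\<in>Pow A'. \<Sum>w\<in>Pow A'. \<Sum>a\<in>Pow F. ((Ks ! j) x u * v (u \<union> a)) * cnj ((Ks ! j) y w * v (w \<union> a)))"
    proof (intro sum.cong refl)
      fix u w assume "u \<in> Pow A'" "w \<in> Pow A'"
      then show "(Ks ! j) x u * rdm n A' v u w * cnj ((Ks ! j) y w)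
          = (\<Sum>a\<in>Pow F. ((Ks ! j) x u * v (u \<union> a)) * cnj ((Ks ! j) y w * v (w \<union> a)))"
        unfolding rdm_def NA by (simp add: sum_distrib_left sum_distrib_right algebra_simps)
    qed
    also have "\<dots> = (\<Sum>a\<in>Pow F. \<Sum>u\<in>Pow A'. \<Sum>w\<in>Pow A'. ((Ks ! j) x u * v (u \<union> a)) * cnj ((Ks ! j) y w * v (w \<union> a)))"
      by (rule sum_swap3[symmetric])
    also have "\<dots> = (\<Sum>a\<in>Pow F. kf n F Ks v j a x * cnj (kf n F Ks v j a y))"
      unfolding kf_def A'_def[symmetric] by (simp add: sum_product cnj_sum)
    finally show "(\<Sum>u\<in>Pow A'. \<Sum>w\<in>Pow A'. (Ks ! j) x u * rdm n A' v u w * cnj ((Ks ! j) y w))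
        = (\<Sum>a\<in>Pow F. kf n F Ks v j a x * cnj (kf n F Ks v j a y))" .
  qed
  finally show ?thesis .
qed

lemma kraus_rdm:
  assumes F: "F \<subseteq> {..<n}" and K: "is_kraus n F Ks" and a: "a \<subseteq> F" and b: "b \<subseteq> F"
  shows "rdm n F v a b = (\<Sum>j<length Ks. \<Sum>x\<in>Pow {..<n}. kf n F Ks v j a x * cnj (kf n F Ks v j b x))"
proof -
  define A' where "A' = {..<n} - F"
  have compl: "(\<Sum>j<length Ks. \<Sum>x\<in>Pow {..<n}. (Ks ! j) x z * cnj ((Ks ! j) x z')) = (if z = z' then 1 else 0)"
    if "z \<in> Pow A'" "z' \<in> Pow A'" for z z'
  proof -
    have "(\<Sum>j<length Ks. \<Sum>x\<in>Pow {..<n}. cnj ((Ks ! j) x z) * (Ks ! j) x z') = (if z = z' then 1 else 0)"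
      using K that unfolding is_kraus_def A'_def by (simp add: sum_list_sum_nth atLeast0LessThan)
    then have "cnj (\<Sum>j<length Ks. \<Sum>x\<in>Pow {..<n}. cnj ((Ks ! j) x z) * (Ks ! j) x z') = (if z = z' then 1 else 0)"
      by simp
    then show ?thesis by (simp add: cnj_sum mult.commute)
  qed
  have "(\<Sum>j<length Ks. \<Sum>x\<in>Pow {..<n}. kf n F Ks v j a x * cnj (kf n F Ks v j b x))
      = (\<Sum>j<length Ks. \<Sum>x\<in>Pow {..<n}. \<Sum>z\<in>Pow A'. \<Sum>z'\<in>Pow A'. ((Ks ! j) x z * cnj ((Ks ! j) x z')) * (v (z \<union> a) * cnj (v (z' \<union> b))))"
    unfolding kf_def A'_def[symmetric]
  proof (intro sum.cong refl)
    fix j x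
    show "(\<Sum>z\<in>Pow A'. (Ks ! j) x z * v (z \<union> a)) * cnj (\<Sum>z\<in>Pow A'. (Ks ! j) x z * v (z \<union> b))
        = (\<Sum>z\<in>Pow A'. \<Sum>z'\<in>Pow A'. ((Ks ! j) x z * cnj ((Ks ! j) x z')) * (v (z \<union> a) * cnj (v (z' \<union> b))))"
      unfolding prod_sums_cnj by (intro sum.cong refl) (simp add: algebra_simps)
  qed
  also have "\<dots> = (\<Sum>z\<in>Pow A'. \<Sum>z'\<in>Pow A'. (\<Sum>j<length Ks. \<Sum>x\<in>Pow {..<n}. (Ks ! j) x z * cnj ((Ks ! j) x z')) * (v (z \<union> a) * cnj (v (z' \<union> b))))"
  proof -
    have "(\<Sum>j<length Ks. \<Sum>x\<in>Pow {..<n}. \<Sum>z\<in>Pow A'. \<Sum>z'\<in>Pow A'. ((Ks ! j) x z * cnj ((Ks ! j) x z')) * (v (z \<union> a) * cnj (v (z' \<union> b))))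
        = (\<Sum>j<length Ks. \<Sum>z\<in>Pow A'. \<Sum>z'\<in>Pow A'. \<Sum>x\<in>Pow {..<n}. ((Ks ! j) x z * cnj ((Ks ! j) x z')) * (v (z \<union> a) * cnj (v (z' \<union> b))))"
      by (rule sum.cong[OF refl], rule sum_swap3)
    also have "\<dots> = (\<Sum>z\<in>Pow A'. \<Sum>z'\<in>Pow A'. \<Sum>j<length Ks. \<Sum>x\<in>Pow {..<n}. ((Ks ! j) x z * cnj ((Ks ! j) x z')) * (v (z \<union> a) * cnj (v (z' \<union> b))))"
      by (rule sum_swap3)
    also have "\<dots> = (\<Sum>z\<in>Pow A'. \<Sum>z'\<in>Pow A'. (\<Sum>j<length Ks. \<Sum>x\<in>Pow {..<n}. (Ks ! j) x z * cnj ((Ks ! j) x z')) * (v (z \<union> a) * cnj (v (z' \<union> b))))"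
      by (simp add: sum_distrib_right)
    finally show ?thesis .
  qed
  also have "\<dots> = (\<Sum>z\<in>Pow A'. \<Sum>z'\<in>Pow A'. if z = z' then v (z \<union> a) * cnj (v (z' \<union> b)) else 0)"
    by (intro sum.cong refl) (simp add: compl)
  also have "\<dots> = (\<Sum>z\<in>Pow A'. v (a \<union> z) * cnj (v (b \<union> z)))"
    unfolding A'_def by (simp add: sum.delta' Un_commute)
  also have "\<dots> = rdm n F v a b" using a b unfolding rdm_def A'_def by simp
  finally show ?thesis by simp
qed


lemma ip_nz: "ip n u u = 1 \<Longrightarrow> \<exists>x\<in>Pow {..<n}. u x \<noteq> 0"
  by (rule ccontr) (simp add: ip_def)

lemma kf_eigen:
  assumes F: "F \<subseteq> {..<n}"
    and hexp: "\<And>x y. x \<subseteq> {..<n} \<Longrightarrow> y \<subseteq> {..<n} \<Longrightarrow> kraus_apply n F Ks (ptrace n F v) x y = proj n v x y"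
    and j: "j < length Ks" and a: "a \<subseteq> F"
  shows "\<exists>l. \<forall>x\<in>Pow {..<n}. kf n F Ks v j a x = l * v x"
proof (cases "\<exists>x0\<in>Pow {..<n}. v x0 \<noteq> 0")
  case True
  then obtain x0 where x0: "x0 \<in> Pow {..<n}" "v x0 \<noteq> 0" by blast
  define I where "I = {..<length Ks} \<times> Pow F"
  have finI: "finite I" unfolding I_def using F by (auto intro: finite_subset)
  have h: "(\<Sum>p\<in>I. kf n F Ks v (fst p) (snd p) x * cnj (kf n F Ks v (fst p) (snd p) y)) = v x * cnj (v y)"
    if "x \<in> Pow {..<n}" "y \<in> Pow {..<n}" for x y
  proof -
    have "(\<Sum>p\<in>I. kf n F Ks v (fst p) (snd p) x * cnj (kf n F Ks v (fst p) (snd p) y))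
        = (\<Sum>j<length Ks. \<Sum>a\<in>Pow F. kf n F Ks v j a x * cnj (kf n F Ks v j a y))"
      unfolding I_def by (simp add: sum.cartesian_product split_beta)
    also have "\<dots> = kraus_apply n F Ks (ptrace n F v) x y"
      using kraus_expand[OF F] that by simp
    also have "\<dots> = v x * cnj (v y)" using hexp that by (simp add: proj_def)
    finally show ?thesis .
  qed
  have "(j, a) \<in> I" unfolding I_def using j a by simp
  then have r: "v x0 * kf n F Ks v j a x = v x * kf n F Ks v j a x0" if "x \<in> Pow {..<n}" for x
    using rank1[OF finI h that x0(1), where i="(j, a)"] by simp
  show ?thesis
  proof (intro exI ballI)
    fix x assume "x \<in> Pow {..<n}"
    then have "v x0 * kf n F Ks v j a x = v x * kf n F Ks v j a x0" by (rule r)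
    then show "kf n F Ks v j a x = kf n F Ks v j a x0 / v x0 * v x" using x0(2)
      by (simp add: field_simps)
  qed
next
  case False
  show ?thesis
  proof (intro exI ballI)
    fix x
    have "kf n F Ks v j a x = 0 * kf n F Ks v j a x"
      by (rule kf_cong[OF a F]) (use False in auto)
    then show "kf n F Ks v j a x = 0 * v x" by simp
  qed
qed

lemma eigen_const:
  assumes F: "F \<subseteq> {..<n}" and a: "a \<subseteq> F"
    and h: "\<And>v. v \<in> C \<Longrightarrow> \<exists>l. \<forall>x\<in>Pow {..<n}. kf n F Ks v j a x = l * v x"
    and Cadd: "\<And>u w. u \<in> C \<Longrightarrow> w \<in> C \<Longrightarrow> (\<lambda>b. u b + w b) \<in> C"
    and u: "u \<in> C" "x1 \<in> Pow {..<n}" "u x1 \<noteq> 0" and w: "w \<in> C" "x2 \<in> Pow {..<n}" "w x2 \<noteq> 0"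
    and lu: "\<forall>x\<in>Pow {..<n}. kf n F Ks u j a x = lu * u x"
    and lw: "\<forall>x\<in>Pow {..<n}. kf n F Ks w j a x = lw * w x"
  shows "lu = lw"
proof -
  obtain ls where ls: "\<forall>x\<in>Pow {..<n}. kf n F Ks (\<lambda>b. u b + w b) j a x = ls * (u x + w x)"
    using h[OF Cadd[OF u(1) w(1)]] by auto
  have e: "(ls - lu) * u x = (lw - ls) * w x" if "x \<in> Pow {..<n}" for x
    using ls lu lw that kf_add[of n F Ks u w j a x] by (simp add: algebra_simps)
  show ?thesis
  proof (cases "ls = lu")
    case True
    then have "(lw - ls) * w x2 = 0" using e[OF w(2)] by simp
    then show ?thesis using w(3) True by simp
  next
    case False
    define \<mu> where "\<mu> = (lw - ls) / (ls - lu)"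
    have uw: "u b = \<mu> * w b" if "b \<subseteq> {..<n}" for b
      using e[of b] that False unfolding \<mu>_def by (simp add: field_simps)
    have "kf n F Ks u j a x1 = \<mu> * kf n F Ks w j a x1"
      by (rule kf_cong[OF a F uw])
    then have "lu * u x1 = \<mu> * (lw * w x1)" using lu lw u(2) by simp
    also have "\<dots> = lw * u x1" using uw[of x1] u(2) by simp
    finally show ?thesis using u(3) by simp
  qed
qed

lemma KL:
  assumes corr: "correctable n C d" and F: "F \<subseteq> {..<n}" "card F < d"
    and Cadd: "\<And>u w. u \<in> C \<Longrightarrow> w \<in> C \<Longrightarrow> (\<lambda>b. u b + w b) \<in> C"
    and u: "u \<in> C" "ip n u u = 1" and w: "w \<in> C" "ip n w w = 1"
  shows "rdm n F u = rdm n F w"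
proof -
  obtain Ks where K: "is_kraus n F Ks" and rec: "\<forall>v\<in>C. kraus_apply n F Ks (ptrace n F v) = proj n v"
    using corr F unfolding correctable_def by blast
  have h: "\<exists>l. \<forall>x\<in>Pow {..<n}. kf n F Ks v j a x = l * v x" if "v \<in> C" "j < length Ks" "a \<subseteq> F" for v j a
    by (rule kf_eigen[OF F(1) _ that(2,3)]) (use rec that(1) in simp)
  obtain x1 where x1: "x1 \<in> Pow {..<n}" "u x1 \<noteq> 0" using ip_nz[OF u(2)] by blast
  obtain x2 where x2: "x2 \<in> Pow {..<n}" "w x2 \<noteq> 0" using ip_nz[OF w(2)] by blast
  define L where "L j a = (SOME l. \<forall>x\<in>Pow {..<n}. kf n F Ks u j a x = l * u x)" for j a
  have Lu: "\<forall>x\<in>Pow {..<n}. kf n F Ks u j a x = L j a * u x" if "j < length Ks" "a \<subseteq> F" for j a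
    unfolding L_def by (rule someI_ex) (rule h[OF u(1) that])
  have Lw: "\<forall>x\<in>Pow {..<n}. kf n F Ks w j a x = L j a * w x" if jl: "j < length Ks" and aF: "a \<subseteq> F" for j a
  proof -
    obtain lw where lw: "\<forall>x\<in>Pow {..<n}. kf n F Ks w j a x = lw * w x" using h[OF w(1) jl aF] by blast
    have "L j a = lw"
      by (rule eigen_const[OF F(1) aF _ Cadd u(1) x1 w(1) x2 Lu[OF jl aF] lw])
         (rule h, simp_all add: jl aF)
    then show ?thesis using lw by simp
  qed
  have rv: "rdm n F v a b = (\<Sum>j<length Ks. L j a * cnj (L j b))"
    if v: "ip n v v = 1" and Lv: "\<And>j a. j < length Ks \<Longrightarrow> a \<subseteq> F \<Longrightarrow> \<forall>x\<in>Pow {..<n}. kf n F Ks v j a x = L j a * v x"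
      and ab: "a \<subseteq> F" "b \<subseteq> F" for v a b
  proof -
    have "rdm n F v a b = (\<Sum>j<length Ks. \<Sum>x\<in>Pow {..<n}. (L j a * v x) * cnj (L j b * v x))"
      unfolding kraus_rdm[OF F(1) K ab]
      by (intro sum.cong refl) (simp add: Lv ab)
    also have "\<dots> = (\<Sum>j<length Ks. L j a * cnj (L j b) * (\<Sum>x\<in>Pow {..<n}. cnj (v x) * v x))"
      by (intro sum.cong refl) (simp add: sum_distrib_left algebra_simps)
    also have "\<dots> = (\<Sum>j<length Ks. L j a * cnj (L j b))" using v by (simp add: ip_def)
    finally show ?thesis .
  qed
  show ?thesis
  proof (rule rdm_eqI)
    fix a b assume ab: "a \<subseteq> F" "b \<subseteq> F"
    have "rdm n F u a b = rdm n F w a b"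
      using rv[OF u(2) Lu ab] rv[OF w(2) Lw ab] by simp
    then show "rdm2 n F u u a b = rdm2 n F w w a b" using ab by (simp add: rdm_rdm2)
  qed
qed


lemma sum_concat_nat: "(\<Sum>i<(k1::nat) + k2. g i) = (\<Sum>i<k1. g i) + (\<Sum>i<k2. g (i + k1))"
proof -
  have "(\<Sum>i<k1 + k2. g i) = (\<Sum>i\<in>{0..<k1}. g i) + (\<Sum>i\<in>{k1..<k1 + k2}. g i)"
    by (simp add: atLeast0LessThan[symmetric] sum.atLeastLessThan_concat)
  also have "(\<Sum>i\<in>{k1..<k1 + k2}. g i) = (\<Sum>i\<in>{0..<k2}. g (i + k1))"
    using sum.shift_bounds_nat_ivl[of g 0 k1 k2] by (simp add: add.commute)
  finally show ?thesis by (simp add: atLeast0LessThan)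
qed

lemma cspan_gen: "v \<in> X \<Longrightarrow> v \<in> cspan X"
  unfolding cspan_def by (rule CollectI, rule exI[of _ 1], rule exI[of _ "\<lambda>_. 1"], rule exI[of _ "\<lambda>_. v"]) simp

lemma cspan_zero: "(\<lambda>b. 0) \<in> cspan X"
  unfolding cspan_def by (rule CollectI, rule exI[of _ 0]) simp

lemma cspan_scale:
  assumes "u \<in> cspan X"
  shows "(\<lambda>b. c * u b) \<in> cspan X"
proof -
  obtain k :: nat and cs vs where u: "\<forall>i<k. vs i \<in> X" "u = (\<lambda>b. \<Sum>i<k. cs i * vs i b)"
    using assms unfolding cspan_def mem_Collect_eq by blast
  show ?thesis unfolding cspan_def
    by (rule CollectI, rule exI[of _ k], rule exI[of _ "\<lambda>i. c * cs i"], rule exI[of _ vs])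
       (simp add: u sum_distrib_left mult.assoc)
qed

lemma cspan_add:
  assumes "u \<in> cspan X" "w \<in> cspan X"
  shows "(\<lambda>b. u b + w b) \<in> cspan X"
proof -
  obtain k1 :: nat and c1 vs1 where u: "\<forall>i<k1. vs1 i \<in> X" "u = (\<lambda>b. \<Sum>i<k1. c1 i * vs1 i b)"
    using assms(1) unfolding cspan_def mem_Collect_eq by blast
  obtain k2 :: nat and c2 vs2 where w: "\<forall>i<k2. vs2 i \<in> X" "w = (\<lambda>b. \<Sum>i<k2. c2 i * vs2 i b)"
    using assms(2) unfolding cspan_def mem_Collect_eq by blast
  define c where "c i = (if i < k1 then c1 i else c2 (i - k1))" for i
  define vs where "vs i = (if i < k1 then vs1 i else vs2 (i - k1))" for i
  have mem: "\<forall>i<k1 + k2. vs i \<in> X" using u(1) w(1) unfolding vs_def by auto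
  have eq: "(\<lambda>b. u b + w b) = (\<lambda>b. \<Sum>i<k1 + k2. c i * vs i b)"
    unfolding sum_concat_nat u(2) w(2) c_def vs_def by simp
  show ?thesis unfolding cspan_def using mem eq by blast
qed

lemma ip_self: "ip n v v = complex_of_real (\<Sum>b\<in>Pow {..<n}. (cmod (v b))\<^sup>2)"
  unfolding ip_def of_real_sum
proof (intro sum.cong refl)
  fix b show "cnj (v b) * v b = complex_of_real ((cmod (v b))\<^sup>2)"
    using complex_norm_square[of "v b"] by (simp only: mult.commute)
qed

lemma pure_iff: "is_pure_state n v \<longleftrightarrow> is_state n v \<and> ip n v v = 1"
  unfolding is_pure_state_def ip_self by (simp only: of_real_eq_1_iff)

lemma ip_cnj: "ip n w v = cnj (ip n v w)"
  by (simp add: ip_def cnj_sum mult.commute)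

lemma ip_lin2:
  "ip n (\<lambda>b. a * p b + c * q b) (\<lambda>b. a * p b + c * q b)
     = cnj a * a * ip n p p + cnj a * c * ip n p q + cnj c * a * ip n q p + cnj c * c * ip n q q"
  unfolding ip_def by (simp add: sum.distrib sum_distrib_left algebra_simps)

lemma ip_scale: "ip n (\<lambda>b. c * v b) (\<lambda>b. c * v b) = cnj c * c * ip n v v"
  unfolding ip_def by (simp add: sum_distrib_left algebra_simps)

lemma ip_scale_right: "ip n v (\<lambda>b. c * w b) = c * ip n v w"
  unfolding ip_def by (simp add: sum_distrib_left algebra_simps)

lemma ip_zero_vec:
  assumes "is_state n v" "ip n v v = 0"
  shows "v = (\<lambda>b. 0)"
proof
  fix b
  have "(\<Sum>b\<in>Pow {..<n}. (cmod (v b))\<^sup>2) = 0" using assms(2) unfolding ip_self by (simp only: of_real_eq_0_iff)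
  then have "\<forall>b\<in>Pow {..<n}. (cmod (v b))\<^sup>2 = 0" by (subst (asm) sum_nonneg_eq_0_iff) auto
  then show "v b = 0" using assms(1) by (cases "b \<subseteq> {..<n}") (auto simp: is_state_def)
qed

lemma ip_eq_vec:
  assumes "is_state n v" "is_state n w" "ip n v v = 1" "ip n w w = 1" "ip n v w = 1"
  shows "v = w"
proof -
  define d where "d b = 1 * v b + (-1) * w b" for b
  have ds: "is_state n d" using assms(1,2) by (simp add: is_state_def d_def)
  have "ip n d d = ip n v v - ip n v w - ip n w v + ip n w w"
    unfolding d_def[abs_def] ip_lin2 by simp
  also have "\<dots> = 0" using assms(3-5) ip_cnj[of n w v] by simp
  finally have "d = (\<lambda>b. 0)" by (rule ip_zero_vec[OF ds])
  then show ?thesis unfolding d_def[abs_def] by (simp add: fun_eq_iff)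
qed

lemma stab_code_linsum:
  assumes "\<forall>i<k. vs i \<in> stab_code n m \<phi>"
  shows "(\<lambda>b. \<Sum>i<k. c i * vs i b) \<in> stab_code n m \<phi>"
  using assms unfolding stab_code_def is_state_def by (auto simp: pauli_linsum)

lemma stab_code_scale:
  assumes "v \<in> stab_code n m \<phi>"
  shows "(\<lambda>b. c * v b) \<in> stab_code n m \<phi>"
  using assms unfolding stab_code_def is_state_def by (auto simp: pauli_scale)

lemma cspan_states:
  assumes "\<And>v. v \<in> X \<Longrightarrow> is_state n v" "u \<in> cspan X"
  shows "is_state n u"
proof -
  obtain k :: nat and cs vs where u: "\<forall>i<k. vs i \<in> X" "u = (\<lambda>b. \<Sum>i<k. cs i * vs i b)"
    using assms(2) unfolding cspan_def mem_Collect_eq by blast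
  show ?thesis unfolding is_state_def
  proof (intro allI impI)
    fix b assume b: "\<not> b \<subseteq> {..<n}"
    have "\<forall>i<k. vs i b = 0" using assms(1) u(1) b by (auto simp: is_state_def)
    then show "u b = 0" by (simp add: u(2))
  qed
qed

lemma dist_bound:
  assumes l: "l \<ge> 1"
    and h: "case code_distance n C of enat d \<Rightarrow> real B < sqrt (real d / real l) | \<infinity> \<Rightarrow> True"
    and F: "card F \<le> B * (B * l)"
  shows "\<exists>d'. correctable n C d' \<and> card F < d'"
proof -
  have lt: "enat (card F) < code_distance n C"
  proof (cases "code_distance n C")
    case (enat d)
    then have "real B < sqrt (real d / real l)" using h by simp
    then have "(real B)\<^sup>2 < (sqrt (real d / real l))\<^sup>2"
      by (rule power_strict_mono) simp_all
    then have "(real B)\<^sup>2 < real d / real l" by simp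
    then have "(real B)\<^sup>2 * real l < real d" using l by (simp add: field_simps)
    then have "B * (B * l) < d" by (simp add: power2_eq_square mult.assoc flip: of_nat_mult of_nat_less_iff)
    then show ?thesis using F enat by simp
  next
    case infinity then show ?thesis by simp
  qed
  then obtain x where "x \<in> {enat d | d. correctable n C d}" "enat (card F) < x"
    unfolding code_distance_def less_Sup_iff by blast
  then show ?thesis by auto
qed


definition par :: "pauli \<Rightarrow> pauli \<Rightarrow> nat" where
  "par P Q = (case P of (k1, x1, z1) \<Rightarrow> case Q of (k2, x2, z2) \<Rightarrow> card (z1 \<inter> x2) + card (z2 \<inter> x1))"

lemma pauli_commute_par:
  assumes "is_pauli n P" "is_pauli n Q"
  shows "pauli_apply P (pauli_apply Q v) = (\<lambda>b. (-1) ^ par P Q * pauli_apply Q (pauli_apply P v) b)"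
proof -
  obtain k1 x1 z1 where P: "P = (k1, x1, z1)" by (cases P) auto
  obtain k2 x2 z2 where Q: "Q = (k2, x2, z2)" by (cases Q) auto
  show ?thesis using pauli_commute[of n k1 x1 z1 k2 x2 z2 v] assms unfolding P Q par_def by simp
qed

lemma par_phase: "par (k, x, z) Q = par (k', x, z) Q" "par P (k, x, z) = par P (k', x, z)"
  by (cases P; cases Q; simp add: par_def)+

lemma anticomm_zero:
  assumes s: "is_pauli n s" and Q: "is_pauli n Q" and odd: "odd (par s Q)"
    and y: "pauli_apply s y = y"
  shows "ip n y (pauli_apply Q y) = 0"
proof -
  have "ip n y (pauli_apply Q y) = ip n (pauli_apply s y) (pauli_apply s (pauli_apply Q y))"
    using pauli_unitary[OF s, of y "pauli_apply Q y"] by simp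
  also have "pauli_apply s (pauli_apply Q y) = (\<lambda>b. (-1) * pauli_apply Q y b)"
    using pauli_commute_par[OF s Q, of y] odd y by simp
  also have "ip n (pauli_apply s y) (\<lambda>b. (-1) * pauli_apply Q y b) = - ip n y (pauli_apply Q y)"
    unfolding ip_scale_right y by simp
  finally show ?thesis by simp
qed

context stabctx begin

lemma eigen_in_S:
  assumes Q: "is_pauli n (0, x, z)" and nz: "ip n \<phi> (pauli_apply (0, x, z) \<phi>) \<noteq> 0"
  shows "\<exists>k. (k, x, z) \<in> S \<and> \<i> ^ k * ip n \<phi> (pauli_apply (0, x, z) \<phi>) = 1"
proof -
  define c where "c = ip n \<phi> (pauli_apply (0, x, z) \<phi>)"
  have comm: "pauli_apply s (pauli_apply (0, x, z) v) = pauli_apply (0, x, z) (pauli_apply s v)" if s: "s \<in> S" for s v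
  proof -
    have "even (par s (0, x, z))"
    proof (rule ccontr)
      assume "\<not> even (par s (0, x, z))"
      then have "ip n \<phi> (pauli_apply (0, x, z) \<phi>) = 0"
        by (intro anticomm_zero[OF S_pauli[OF s] Q]) (simp_all add: S_fix[OF s])
      then show False using nz by simp
    qed
    then show ?thesis using pauli_commute_par[OF S_pauli[OF s] Q, of v] by simp
  qed
  have eig: "pauli_apply (0, x, z) \<phi> = (\<lambda>a. c * \<phi> a)"
    unfolding c_def by (rule commute_eigen[OF Q comm])
  have fz: "finite z" using Q by (auto simp: is_pauli_def intro: finite_subset)
  have "pauli_apply (0, x, z) (pauli_apply (0, x, z) \<phi>) = (\<lambda>a. c * c * \<phi> a)"
    unfolding eig pauli_scale by (simp add: eig mult.assoc)
  moreover have "pauli_apply (0, x, z) (pauli_apply (0, x, z) \<phi>) = (\<lambda>a. (-1) ^ card (z \<inter> x) * \<phi> a)"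
    unfolding pauli_square[OF fz] by simp
  ultimately have e: "c * c * \<phi> a = (-1) ^ card (z \<inter> x) * \<phi> a" for a
    by (metis (no_types) fun_cong)
  have s0: "((-1::complex) ^ card (z \<inter> x)) \<noteq> 0" by simp
  have "(\<lambda>a. (c * c / (-1) ^ card (z \<inter> x)) * \<phi> a) = \<phi>"
  proof
    fix a
    have "(c * c / (-1) ^ card (z \<inter> x)) * \<phi> a = (c * c * \<phi> a) / (-1) ^ card (z \<inter> x)" by simp
    also have "\<dots> = ((-1) ^ card (z \<inter> x) * \<phi> a) / (-1) ^ card (z \<inter> x)" by (simp only: e)
    also have "\<dots> = \<phi> a" using s0 by simp
    finally show "(c * c / (-1) ^ card (z \<inter> x)) * \<phi> a = \<phi> a" .
  qed
  then have "c * c / (-1) ^ card (z \<inter> x) = 1" by (rule scal_phi)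
  then have cc: "c * c = 1 \<or> c * c = -1" by (cases "even (card (z \<inter> x))") (auto simp: minus_equation_iff)
  obtain k where k: "k < 4" "\<i> ^ k * c = 1"
  proof -
    from cc show thesis
    proof
      assume "c * c = 1"
      then have "(c - 1) * (c + 1) = 0" by (simp add: algebra_simps)
      then have "c - 1 = 0 \<or> c + 1 = 0" by simp
      then have "c = 1 \<or> c = -1" by (auto simp: eq_neg_iff_add_eq_0)
      then show thesis
      proof
        assume "c = 1" then show thesis using that[of 0] by simp
      next
        assume "c = -1" then show thesis using that[of 2] by (simp add: power2_eq_square)
      qed
    next
      assume "c * c = -1"
      then have "(c - \<i>) * (c + \<i>) = 0" by (simp add: algebra_simps)
      then have "c - \<i> = 0 \<or> c + \<i> = 0" by simp
      then have "c = \<i> \<or> c = - \<i>" by (auto simp: eq_neg_iff_add_eq_0)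
      then show thesis
      proof
        assume "c = \<i>" then show thesis using that[of 3] by (simp add: power_numeral_reduce)
      next
        assume "c = - \<i>" then show thesis using that[of 1] by simp
      qed
    qed
  qed
  have "pauli_apply (k, x, z) \<phi> = \<phi>"
    unfolding pauli_phase[of k] eig using k(2) by (simp add: mult.assoc[symmetric])
  moreover have "is_pauli n (k, x, z)" using Q k(1) by (simp add: is_pauli_def)
  ultimately have "(k, x, z) \<in> S" by (simp add: S_mem)
  then show ?thesis using k(2) unfolding c_def by blast
qed

end


locale mainctx = stabctx +
  fixes U :: "gate list" and l :: nat
  assumes gates: "\<forall>g\<in>set U. is_gate n g"
    and KLa: "\<And>F u. F \<subseteq> {..<n} \<Longrightarrow> card F \<le> blowup n U * (blowup n U * l) \<Longrightarrow>
       u \<in> local_code n l (circuit_apply U \<phi>) \<Longrightarrow> ip n u u = 1 \<Longrightarrow> rdm n F u = rdm n F (circuit_apply U \<phi>)"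
begin

abbreviation "\<psi> \<equiv> circuit_apply U \<phi>"
abbreviation "BB \<equiv> blowup n U"
abbreviation "CC \<equiv> local_code n l \<psi>"

lemma psi_state: "is_state n \<psi>" by (rule circuit_state[OF gates phi_state])
lemma psi_norm: "ip n \<psi> \<psi> = 1" using circuit_ip[OF gates] phi_norm by simp
lemma Wi_psi: "circuit_apply (cinv U) \<psi> = \<phi>" by (rule cinv_left[OF gates])

lemma gen_in_C:
  assumes "is_state n \<chi>" "ip n \<chi> \<chi> = 1" "\<And>A. A \<subseteq> {..<n} \<Longrightarrow> card A \<le> l \<Longrightarrow> rdm n A \<chi> = rdm n A \<psi>"
  shows "\<chi> \<in> CC"
  unfolding local_code_def by (rule cspan_gen) (use assms in \<open>auto simp: pure_iff\<close>)

lemma psi_in_C: "\<psi> \<in> CC"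
  by (rule gen_in_C[OF psi_state psi_norm]) simp

lemma C_states: "u \<in> CC \<Longrightarrow> is_state n u"
  unfolding local_code_def by (rule cspan_states) (auto simp: pure_iff)

lemma back_bound: "A \<subseteq> {..<n} \<Longrightarrow> card (back_lc U A) \<le> BB * card A"
  using blowup_bound[OF gates] by blast

lemma fwd_bound: "A \<subseteq> {..<n} \<Longrightarrow> card (fwd_lc U A) \<le> BB * card A"
  using blowup_bound[OF gates] by blast

lemma W_in_C:
  assumes v: "is_state n v" "ip n v v = 1"
    and loc: "\<And>L. L \<subseteq> {..<n} \<Longrightarrow> card L \<le> BB * l \<Longrightarrow> rdm n L v = rdm n L \<phi>"
  shows "circuit_apply U v \<in> CC"
proof (rule gen_in_C)
  show "is_state n (circuit_apply U v)" by (rule circuit_state[OF gates v(1)])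
  show "ip n (circuit_apply U v) (circuit_apply U v) = 1" using circuit_ip[OF gates] v(2) by simp
  fix A assume A: "A \<subseteq> {..<n}" "card A \<le> l"
  have L: "back_lc U A \<subseteq> {..<n}" by (rule back_lc_sub(1)[OF gates A(1)])
  have "card (back_lc U A) \<le> BB * card A" by (rule back_bound[OF A(1)])
  also have "\<dots> \<le> BB * l" using A(2) by simp
  finally have "rdm n (back_lc U A) v = rdm n (back_lc U A) \<phi>" by (rule loc[OF L])
  then show "rdm n A (circuit_apply U v) = rdm n A \<psi>" by (rule circuit_loc[OF gates A(1)])
qed

lemma KL_back:
  assumes L: "L \<subseteq> {..<n}" "card L \<le> BB * l" and u: "u \<in> CC" "ip n u u = 1"
  shows "rdm n L (circuit_apply (cinv U) u) = rdm n L \<phi>"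
proof -
  have F: "fwd_lc U L \<subseteq> {..<n}" by (rule fwd_lc_sub(1)[OF gates L(1)])
  have "card (fwd_lc U L) \<le> BB * card L" by (rule fwd_bound[OF L(1)])
  also have "\<dots> \<le> BB * (BB * l)" using L(2) by simp
  finally have "rdm n (fwd_lc U L) u = rdm n (fwd_lc U L) \<psi>" by (rule KLa[OF F _ u])
  then have "rdm n L (circuit_apply (cinv U) u) = rdm n L (circuit_apply (cinv U) \<psi>)"
    by (intro circuit_loc[OF cinv_gates[OF gates] L(1)]) (simp add: back_lc_cinv)
  then show ?thesis by (simp add: Wi_psi)
qed

lemma dist_nonzero:
  assumes xz: "x \<subseteq> L" "z \<subseteq> L" and L: "L \<subseteq> {..<n}" "card L \<le> BB * l"
    and comm: "\<And>s. s \<in> S \<Longrightarrow> pauli_weight s \<le> BB * l \<Longrightarrow> even (par s (0, x, z))"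
  shows "ip n \<phi> (pauli_apply (0, x, z) \<phi>) \<noteq> 0"
proof
  assume zero: "ip n \<phi> (pauli_apply (0, x, z) \<phi>) = 0"
  define m0 where "m0 = (if odd (card (z \<inter> x)) then 1 else (0::nat))"
  define Q' where "Q' = (m0, x, z)"
  have Qp: "is_pauli n Q'" "is_pauli n (0, x, z)" using xz L unfolding Q'_def m0_def by (auto simp: is_pauli_def)
  have fz: "finite z" using xz L by (auto intro: finite_subset)
  have QQ: "pauli_apply Q' (pauli_apply Q' w) = w" for w
  proof -
    have "\<i> ^ (m0 + m0) * (-1) ^ card (z \<inter> x) = (1::complex)"
      unfolding m0_def by (cases "odd (card (z \<inter> x))") auto
    then show ?thesis unfolding Q'_def pauli_square[OF fz] by simp
  qed
  define \<phi>2 where "\<phi>2 = pauli_apply Q' \<phi>"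
  have s2: "is_state n \<phi>2" unfolding \<phi>2_def by (rule pauli_state[OF Qp(1) phi_state])
  have n2: "ip n \<phi>2 \<phi>2 = 1" unfolding \<phi>2_def using pauli_unitary[OF Qp(1)] phi_norm by simp
  have o12: "ip n \<phi> \<phi>2 = 0"
    unfolding \<phi>2_def Q'_def pauli_phase[of m0] ip_scale_right zero by simp
  have loc2: "rdm n L2 \<phi>2 = rdm n L2 \<phi>" if L2: "L2 \<subseteq> {..<n}" "card L2 \<le> BB * l" for L2
  proof (rule pauli_complete[OF L2(1)])
    fix x' z' assume xz': "x' \<subseteq> L2" "z' \<subseteq> L2"
    have Rp: "is_pauli n (0, x', z')" using xz' L2 by (auto simp: is_pauli_def)
    have "ip n \<phi>2 (pauli_apply (0, x', z') \<phi>2)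
        = ip n (pauli_apply Q' \<phi>) (\<lambda>b. (-1) ^ par (0, x', z') Q' * pauli_apply Q' (pauli_apply (0, x', z') \<phi>) b)"
      unfolding \<phi>2_def pauli_commute_par[OF Rp Qp(1)] ..
    also have "\<dots> = (-1) ^ par (0, x', z') Q' * ip n \<phi> (pauli_apply (0, x', z') \<phi>)"
      unfolding ip_scale_right pauli_unitary[OF Qp(1)] ..
    also have "\<dots> = ip n \<phi> (pauli_apply (0, x', z') \<phi>)"
    proof (cases "even (par (0, x', z') Q')")
      case True then show ?thesis by simp
    next
      case False
      have "ip n \<phi> (pauli_apply (0, x', z') \<phi>) = 0"
      proof (rule ccontr)
        assume nz: "ip n \<phi> (pauli_apply (0, x', z') \<phi>) \<noteq> 0"
        obtain k where k: "(k, x', z') \<in> S" using eigen_in_S[OF Rp nz] by blast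
        have "pauli_weight (k, x', z') \<le> card L2"
          unfolding pauli_weight_def using xz' L2 by (auto intro!: card_mono intro: finite_subset)
        then have "even (par (k, x', z') (0, x, z))" using comm[OF k] L2(2) by simp
        moreover have "par (k, x', z') (0, x, z) = par (0, x', z') Q'"
          unfolding Q'_def par_def by simp
        ultimately show False using False by simp
      qed
      then show ?thesis by simp
    qed
    finally show "ip n \<phi>2 (pauli_apply (0, x', z') \<phi>2) = ip n \<phi> (pauli_apply (0, x', z') \<phi>)" .
  qed
  have W2: "circuit_apply U \<phi>2 \<in> CC" by (rule W_in_C[OF s2 n2 loc2])
  define r where "r = complex_of_real (1 / sqrt 2)"
  define y where "y = (\<lambda>b. r * \<phi> b + r * \<phi>2 b)"
  have rr: "cnj r * r = 1 / 2"
    unfolding r_def by (simp flip: of_real_mult)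
  have ny: "ip n y y = 1"
    unfolding y_def ip_lin2 rr o12 n2 phi_norm using ip_cnj[of n \<phi>2 \<phi>] o12 by simp
  have Qy: "pauli_apply Q' y = y"
    unfolding y_def pauli_lin2 \<phi>2_def QQ by (simp add: add.commute)
  define u0 where "u0 = circuit_apply U y"
  have u0: "u0 = (\<lambda>b. r * \<psi> b + r * circuit_apply U \<phi>2 b)"
    unfolding u0_def y_def circuit_lin2 ..
  have u0C: "u0 \<in> CC" using psi_in_C W2 unfolding u0 local_code_def
    by (rule cspan_add[OF cspan_scale cspan_scale])
  have nu0: "ip n u0 u0 = 1" unfolding u0_def using circuit_ip[OF gates] ny by simp
  have "rdm n L (circuit_apply (cinv U) u0) = rdm n L \<phi>" by (rule KL_back[OF L u0C nu0])
  then have "rdm n L y = rdm n L \<phi>" unfolding u0_def cinv_left[OF gates] .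
  then have "ip n y (pauli_apply Q' y) = ip n \<phi> (pauli_apply Q' \<phi>)"
    unfolding Q'_def by (rule pauli_exp_eq[OF xz L(1)])
  then have "ip n y y = ip n \<phi> \<phi>2" unfolding Qy \<phi>2_def by simp
  then show False using ny o12 by simp
qed

end


lemma circuit_scale: "circuit_apply U (\<lambda>b. a * v b) = (\<lambda>b. a * circuit_apply U v b)"
  using circuit_lin2[of U a v 0 v] by simp

lemma gate_zero: "gate_apply g (\<lambda>b. 0) = (\<lambda>b. 0)"
  by (cases g) (simp add: gate_apply_def)

lemma circuit_zero: "circuit_apply U (\<lambda>b. 0) = (\<lambda>b. 0)"
  by (induction U) (simp_all add: circuit_Nil circuit_Cons gate_zero)

context mainctx begin

abbreviation "DD \<equiv> stab_code n (BB * l) \<phi>"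

lemma KEY:
  assumes v: "v \<in> DD" "ip n v v = 1" and L: "L \<subseteq> {..<n}" "card L \<le> BB * l"
  shows "rdm n L v = rdm n L \<phi>"
proof (rule pauli_complete[OF L(1)])
  have vs: "is_state n v" and vfix: "\<And>P. P \<in> S \<Longrightarrow> pauli_weight P \<le> BB * l \<Longrightarrow> pauli_apply P v = v"
    using v(1) unfolding stab_code_def by auto
  fix x z assume xz: "x \<subseteq> L" "z \<subseteq> L"
  have Qp: "is_pauli n (0, x, z)" using xz L by (auto simp: is_pauli_def)
  show "ip n v (pauli_apply (0, x, z) v) = ip n \<phi> (pauli_apply (0, x, z) \<phi>)"
  proof (cases "\<exists>s\<in>S. pauli_weight s \<le> BB * l \<and> odd (par s (0, x, z))")
    case True
    then obtain s where s: "s \<in> S" "pauli_weight s \<le> BB * l" "odd (par s (0, x, z))" by blast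
    have "ip n v (pauli_apply (0, x, z) v) = 0"
      by (rule anticomm_zero[OF S_pauli[OF s(1)] Qp s(3) vfix[OF s(1,2)]])
    moreover have "ip n \<phi> (pauli_apply (0, x, z) \<phi>) = 0"
      by (rule anticomm_zero[OF S_pauli[OF s(1)] Qp s(3) S_fix[OF s(1)]])
    ultimately show ?thesis by simp
  next
    case False
    then have comm: "\<And>s. s \<in> S \<Longrightarrow> pauli_weight s \<le> BB * l \<Longrightarrow> even (par s (0, x, z))" by blast
    have nz: "ip n \<phi> (pauli_apply (0, x, z) \<phi>) \<noteq> 0" by (rule dist_nonzero[OF xz L comm])
    define c where "c = ip n \<phi> (pauli_apply (0, x, z) \<phi>)"
    obtain k where k: "(k, x, z) \<in> S" "\<i> ^ k * c = 1" using eigen_in_S[OF Qp nz] unfolding c_def by blast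
    have "pauli_weight (k, x, z) \<le> card L"
      unfolding pauli_weight_def using xz L by (auto intro!: card_mono intro: finite_subset)
    then have "pauli_apply (k, x, z) v = v" using vfix[OF k(1)] L(2) by simp
    then have e: "\<i> ^ k * pauli_apply (0, x, z) v b = v b" for b
      using fun_cong[OF pauli_phase[of k x z v], of b] by simp
    have Qv: "pauli_apply (0, x, z) v = (\<lambda>b. c * v b)"
    proof
      fix b
      have "pauli_apply (0, x, z) v b = (\<i> ^ k * c) * pauli_apply (0, x, z) v b" using k(2) by simp
      also have "\<dots> = c * (\<i> ^ k * pauli_apply (0, x, z) v b)" by (simp add: algebra_simps)
      also have "\<dots> = c * v b" using e by simp
      finally show "pauli_apply (0, x, z) v b = c * v b" .
    qed
    show ?thesis unfolding Qv ip_scale_right v(2) c_def by simp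
  qed
qed

lemma sub1: "CC \<subseteq> circuit_apply U ` DD"
proof
  fix w assume w: "w \<in> CC"
  obtain k :: nat and cs vs where vs: "\<forall>i<k. vs i \<in> {\<phi>'. is_pure_state n \<phi>' \<and> (\<forall>A. A \<subseteq> {..<n} \<and> card A \<le> l \<longrightarrow> rdm n A \<phi>' = rdm n A \<psi>)}"
    and wdef: "w = (\<lambda>b. \<Sum>i<k. cs i * vs i b)"
    using w unfolding local_code_def cspan_def mem_Collect_eq by blast
  have inD: "circuit_apply (cinv U) (vs i) \<in> DD" if i: "i < k" for i
  proof -
    define \<chi> where "\<chi> = vs i"
    have \<chi>: "is_state n \<chi>" "ip n \<chi> \<chi> = 1" using vs i unfolding \<chi>_def by (auto simp: pure_iff)
    have \<chi>C: "\<chi> \<in> CC" unfolding \<chi>_def local_code_def by (rule cspan_gen) (use vs i in blast)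
    define v where "v = circuit_apply (cinv U) \<chi>"
    have vs': "is_state n v" unfolding v_def by (rule circuit_state[OF cinv_gates[OF gates] \<chi>(1)])
    have nv: "ip n v v = 1" unfolding v_def using circuit_ip[OF cinv_gates[OF gates]] \<chi>(2) by simp
    have "pauli_apply P v = v" if P: "P \<in> S" "pauli_weight P \<le> BB * l" for P
    proof -
      obtain kk x z where Pe: "P = (kk, x, z)" by (cases P) auto
      have Pp: "is_pauli n P" by (rule S_pauli[OF P(1)])
      have R: "x \<union> z \<subseteq> {..<n}" using Pp Pe by (simp add: is_pauli_def)
      have cR: "card (x \<union> z) \<le> BB * l" using P(2) Pe by (simp add: pauli_weight_def)
      have rd: "rdm n (x \<union> z) v = rdm n (x \<union> z) \<phi>" unfolding v_def by (rule KL_back[OF R cR \<chi>C \<chi>(2)])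
      have "ip n v (pauli_apply (kk, x, z) v) = ip n \<phi> (pauli_apply (kk, x, z) \<phi>)"
        by (rule pauli_exp_eq[OF _ _ R rd]) auto
      then have e1: "ip n v (pauli_apply P v) = 1" using S_fix[OF P(1)] phi_norm Pe by simp
      have s2: "is_state n (pauli_apply P v)" by (rule pauli_state[OF Pp vs'])
      have n2: "ip n (pauli_apply P v) (pauli_apply P v) = 1" using pauli_unitary[OF Pp] nv by simp
      show ?thesis using ip_eq_vec[OF vs' s2 nv n2 e1] by simp
    qed
    then have "v \<in> DD" unfolding stab_code_def using vs' by blast
    then show ?thesis unfolding v_def \<chi>_def .
  qed
  have "w = circuit_apply U (\<lambda>b. \<Sum>i<k. cs i * circuit_apply (cinv U) (vs i) b)"
    unfolding circuit_linsum cinv_right[OF gates] wdef ..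
  moreover have "(\<lambda>b. \<Sum>i<k. cs i * circuit_apply (cinv U) (vs i) b) \<in> DD"
    by (rule stab_code_linsum) (use inD in blast)
  ultimately show "w \<in> circuit_apply U ` DD" by blast
qed

lemma sub2: "circuit_apply U ` DD \<subseteq> CC"
proof
  fix w assume "w \<in> circuit_apply U ` DD"
  then obtain v where v: "v \<in> DD" and w: "w = circuit_apply U v" by blast
  have vs: "is_state n v" using v unfolding stab_code_def by auto
  define \<rho> where "\<rho> = (\<Sum>b\<in>Pow {..<n}. (cmod (v b))\<^sup>2)"
  have ipv: "ip n v v = complex_of_real \<rho>" unfolding \<rho>_def by (rule ip_self)
  have \<rho>0: "\<rho> \<ge> 0" unfolding \<rho>_def by (rule sum_nonneg) simp
  show "w \<in> CC"
  proof (cases "\<rho> = 0")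
    case True
    then have "v = (\<lambda>b. 0)" using ip_zero_vec[OF vs] ipv by simp
    then have "w = (\<lambda>b. 0)" using w circuit_zero by simp
    then show ?thesis unfolding local_code_def using cspan_zero by simp
  next
    case False
    then have rpos: "\<rho> > 0" using \<rho>0 by simp
    define r where "r = sqrt \<rho>"
    have r0: "r > 0" unfolding r_def using rpos by simp
    define v' where "v' = (\<lambda>b. complex_of_real (1 / r) * v b)"
    have v'D: "v' \<in> DD" unfolding v'_def by (rule stab_code_scale[OF v])
    have v's: "is_state n v'" using v'D unfolding stab_code_def by auto
    have nv': "ip n v' v' = 1"
    proof -
      have "ip n v' v' = complex_of_real (1 / r * (1 / r) * \<rho>)"
        unfolding v'_def ip_scale ipv by simp
      also have "1 / r * (1 / r) * \<rho> = 1" unfolding r_def using rpos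
        by (simp add: field_simps flip: power2_eq_square)
      finally show ?thesis by simp
    qed
    have "circuit_apply U v' \<in> CC"
      by (rule W_in_C[OF v's nv']) (rule KEY[OF v'D nv'])
    then have "(\<lambda>b. complex_of_real r * circuit_apply U v' b) \<in> CC"
      unfolding local_code_def by (rule cspan_scale)
    moreover have "(\<lambda>b. complex_of_real r * circuit_apply U v' b) = w"
    proof -
      have "(\<lambda>b. complex_of_real r * v' b) = v" unfolding v'_def using r0
        by (simp add: fun_eq_iff flip: of_real_mult)
      then show ?thesis unfolding w circuit_scale[symmetric] by simp
    qed
    ultimately show ?thesis by simp
  qed
qed

lemma main_eq: "CC = circuit_apply U ` DD"
  using sub1 sub2 by blast

end

theorem theorem4p8:
  fixes n l :: nat and U :: "gate list" and \<phi> \<psi> :: vec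
  assumes "is_stabilizer_state n \<phi>"
    and "\<forall>g\<in>set U. is_gate n g"
    and "\<psi> = circuit_apply U \<phi>"
    and "l \<ge> 1"
    and "case d_loc n l \<psi> of
           enat d \<Rightarrow> real (blowup n U) < sqrt (real d / real l)
         | \<infinity> \<Rightarrow> True"
  shows "local_code n l \<psi> = circuit_apply U ` stab_code n (blowup n U * l) \<phi>"
proof -
  interpret stabctx n \<phi> by unfold_locales (rule assms(1))
  have psiC: "\<psi> \<in> local_code n l \<psi>"
    unfolding local_code_def by (rule cspan_gen)
      (use assms(2,3) circuit_state[OF assms(2) phi_state] circuit_ip[OF assms(2)] phi_norm in \<open>auto simp: pure_iff\<close>)
  have psin: "ip n \<psi> \<psi> = 1" using assms(3) circuit_ip[OF assms(2)] phi_norm by simp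
  have KLa: "rdm n F u = rdm n F \<psi>"
    if F: "F \<subseteq> {..<n}" "card F \<le> blowup n U * (blowup n U * l)" and u: "u \<in> local_code n l \<psi>" "ip n u u = 1" for F u
  proof -
    obtain d' where d': "correctable n (local_code n l \<psi>) d'" "card F < d'"
      using dist_bound[OF assms(4) assms(5)[unfolded d_loc_def] F(2)] by blast
    show ?thesis
      by (rule KL[OF d'(1) F(1) d'(2) _ u psiC psin])
         (unfold local_code_def, rule cspan_add)
  qed
  interpret mainctx n \<phi> U l
    by unfold_locales (use assms(2) KLa assms(3) in auto)
  show ?thesis using main_eq assms(3) by simp
qed


end
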